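(* For every $r\ge0$, the tuple $(q_{r,n}1_n)_{n\ge0}$ is an element of the center $Z(\mathcal{NB}_t)$, i.e. $q_{r,m}1_m\circ f=f\circ q_{r,n}1_n$ for all $m,n\ge0$ and all $f\in\mathrm{Hom}_{\mathcal{NB}_t}(B^{\star n},B^{\star m})$.
   Context: Let $\Bbbk$ be a field of characteristic $\neq2$, $t\in\{0,1\}$, and let $\mathcal{NB}_t$ be the nil-Brauer category: the strict graded $\Bbbk$-linear monoidal category (tensor $\star$, unit $\mathbb1$, composition $\circ$) generated by an object $B$ and morphisms $x:B\to B$ (degree 2), $\tau:B\star B\to B\star B$ (degree $-2$), $\cap:B\star B\to\mathbb1$, $\cup:\mathbb1\to B\star B$ (degree 0), with relations ($1=1_B$): $\tau\circ\tau=0$; $(\tau\star1)\circ(1\star\tau)\circ(\tau\star1)=(1\star\tau)\circ(\tau\star1)\circ(1\star\tau)$; $\cap\circ\cup=t1_{\mathbb1}$; $(\cap\star1)\circ(1\star\cup)=1=(1\star\cap)\circ(\cup\star1)$; $\cap\circ\tau=0$; $(1\star\cap)\circ(\tau\star1)=(\cap\star1)\circ(1\star\tau)$; $(x\star1)\circ\tau-\tau\circ(1\star x)=1\star1-\cup\circ\cap$; $\cap\circ(1\star x)=-\cap\circ(x\star1)$. For a polynomial $g\in\Bbbk[x_1,\dots,x_n]$, $g1_n$ denotes the endomorphism of $B^{\star n}$ obtained by substituting $x_i\mapsto 1^{\star(i-1)}\star x\star1^{\star(n-i)}$ (these commute). The symmetric polynomials $q_{r,n}\in\Bbbk[x_1,\dots,x_n]^{S_n}$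 are defined by $\sum_{r\ge0}u^{-r}q_{r,n}=\prod_{i=1}^n\frac{u+x_i}{u-x_i}\in\Bbbk[x_1,\dots,x_n][\![u^{-1}]\!]$. The center of a category is the algebra of endomorphisms of its identity functor. *)

theory Defs
  imports "HOL-Library.Poly_Mapping" "HOL-Computational_Algebra.Formal_Power_Series"
begin

text \<open>Objects of NB_t are the tensor powers B^n, identified with n :: nat (the unit is 0).
  Morphisms are formal expressions built from the generators, identities, composition,
  tensor product and the k-linear structure, modulo the least congruence generated by the
  axioms of a strict k-linear monoidal category and the defining relations of NB_t.
  Cmp g f denotes g composed after f.\<close>

datatype 'k nbmor =
    Idn nat
  | X
  | Tau
  | Cap
  | Cup
  | Cmp "'k nbmor" "'k nbmor"
  | Tns "'k nbmor" "'k nbmor"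
  | Zero nat nat
  | Add "'k nbmor" "'k nbmor"
  | Sm 'k "'k nbmor"

text \<open>Typing: Some (source, target).\<close>
fun nbtyp :: "'k nbmor \<Rightarrow> (nat \<times> nat) option" where
  "nbtyp (Idn n) = Some (n, n)"
| "nbtyp X = Some (1, 1)"
| "nbtyp Tau = Some (2, 2)"
| "nbtyp Cap = Some (2, 0)"
| "nbtyp Cup = Some (0, 2)"
| "nbtyp (Cmp g f) =
     (case (nbtyp f, nbtyp g) of
        (Some (a, b), Some (b', c)) \<Rightarrow> (if b = b' then Some (a, c) else None)
      | _ \<Rightarrow> None)"
| "nbtyp (Tns f g) =
     (case (nbtyp f, nbtyp g) of
        (Some (a, b), Some (a', b')) \<Rightarrow> Some (a + a', b + b')
      | _ \<Rightarrow> None)"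
| "nbtyp (Zero n m) = Some (n, m)"
| "nbtyp (Add f g) = (if nbtyp f = nbtyp g then nbtyp f else None)"
| "nbtyp (Sm c f) = nbtyp f"

definition nbhom :: "nat \<Rightarrow> nat \<Rightarrow> 'k nbmor \<Rightarrow> bool" where
  "nbhom n m f \<longleftrightarrow> nbtyp f = Some (n, m)"

inductive nbeq :: "'k::field \<Rightarrow> 'k nbmor \<Rightarrow> 'k nbmor \<Rightarrow> bool" for t :: 'k where
  refl: "nbeq t f f"
| sym: "nbeq t f g \<Longrightarrow> nbeq t g f"
| trans: "nbeq t f g \<Longrightarrow> nbeq t g h \<Longrightarrow> nbeq t f h"
| cong_Cmp: "nbeq t g g' \<Longrightarrow> nbeq t f f' \<Longrightarrow> nbeq t (Cmp g f) (Cmp g' f')"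
| cong_Tns: "nbeq t f f' \<Longrightarrow> nbeq t g g' \<Longrightarrow> nbeq t (Tns f g) (Tns f' g')"
| cong_Add: "nbeq t f f' \<Longrightarrow> nbeq t g g' \<Longrightarrow> nbeq t (Add f g) (Add f' g')"
| cong_Sm: "nbeq t f f' \<Longrightarrow> nbeq t (Sm c f) (Sm c f')"
| add_assoc: "nbhom n m f \<Longrightarrow> nbhom n m g \<Longrightarrow> nbhom n m h \<Longrightarrow>
     nbeq t (Add (Add f g) h) (Add f (Add g h))"
| add_comm: "nbhom n m f \<Longrightarrow> nbhom n m g \<Longrightarrow> nbeq t (Add f g) (Add g f)"
| add_zero: "nbhom n m f \<Longrightarrow> nbeq t (Add f (Zero n m)) f"
| add_neg: "nbhom n m f \<Longrightarrow> nbeq t (Add f (Sm (-1) f)) (Zero n m)"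
| sm_one: "nbhom n m f \<Longrightarrow> nbeq t (Sm 1 f) f"
| sm_sm: "nbhom n m f \<Longrightarrow> nbeq t (Sm a (Sm b f)) (Sm (a * b) f)"
| sm_add_scalar: "nbhom n m f \<Longrightarrow> nbeq t (Sm (a + b) f) (Add (Sm a f) (Sm b f))"
| sm_add: "nbhom n m f \<Longrightarrow> nbhom n m g \<Longrightarrow> nbeq t (Sm a (Add f g)) (Add (Sm a f) (Sm a g))"
| cmp_add_r: "nbhom n m f \<Longrightarrow> nbhom n m g \<Longrightarrow> nbhom m p h \<Longrightarrow>
     nbeq t (Cmp h (Add f g)) (Add (Cmp h f) (Cmp h g))"
| cmp_add_l: "nbhom n m f \<Longrightarrow> nbhom n m g \<Longrightarrow> nbhom p n h \<Longrightarrow>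
     nbeq t (Cmp (Add f g) h) (Add (Cmp f h) (Cmp g h))"
| cmp_sm_r: "nbhom n m f \<Longrightarrow> nbhom m p h \<Longrightarrow> nbeq t (Cmp h (Sm a f)) (Sm a (Cmp h f))"
| cmp_sm_l: "nbhom n m f \<Longrightarrow> nbhom p n h \<Longrightarrow> nbeq t (Cmp (Sm a f) h) (Sm a (Cmp f h))"
| tns_add_r: "nbhom n m f \<Longrightarrow> nbhom n m g \<Longrightarrow> nbhom p q h \<Longrightarrow>
     nbeq t (Tns h (Add f g)) (Add (Tns h f) (Tns h g))"
| tns_add_l: "nbhom n m f \<Longrightarrow> nbhom n m g \<Longrightarrow> nbhom p q h \<Longrightarrow>
     nbeq t (Tns (Add f g) h) (Add (Tns f h) (Tns g h))"
| tns_sm_r: "nbhom n m f \<Longrightarrow> nbhom p q h \<Longrightarrow> nbeq t (Tns h (Sm a f)) (Sm a (Tns h f))"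
| tns_sm_l: "nbhom n m f \<Longrightarrow> nbhom p q h \<Longrightarrow> nbeq t (Tns (Sm a f) h) (Sm a (Tns f h))"
| cmp_assoc: "nbhom n m f \<Longrightarrow> nbhom m p g \<Longrightarrow> nbhom p q h \<Longrightarrow>
     nbeq t (Cmp (Cmp h g) f) (Cmp h (Cmp g f))"
| cmp_id_l: "nbhom n m f \<Longrightarrow> nbeq t (Cmp (Idn m) f) f"
| cmp_id_r: "nbhom n m f \<Longrightarrow> nbeq t (Cmp f (Idn n)) f"
| tns_assoc: "nbhom n m f \<Longrightarrow> nbhom n' m' g \<Longrightarrow> nbhom n'' m'' h \<Longrightarrow>
     nbeq t (Tns (Tns f g) h) (Tns f (Tns g h))"
| tns_unit_l: "nbhom n m f \<Longrightarrow> nbeq t (Tns (Idn 0) f) f"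
| tns_unit_r: "nbhom n m f \<Longrightarrow> nbeq t (Tns f (Idn 0)) f"
| tns_id: "nbeq t (Tns (Idn a) (Idn b)) (Idn (a + b))"
| interchange: "nbhom n m f \<Longrightarrow> nbhom m p g \<Longrightarrow> nbhom n' m' f' \<Longrightarrow> nbhom m' p' g' \<Longrightarrow>
     nbeq t (Tns (Cmp g f) (Cmp g' f')) (Cmp (Tns g g') (Tns f f'))"
| rel_nil: "nbeq t (Cmp Tau Tau) (Zero 2 2)"
| rel_braid: "nbeq t (Cmp (Tns Tau (Idn 1)) (Cmp (Tns (Idn 1) Tau) (Tns Tau (Idn 1))))
                     (Cmp (Tns (Idn 1) Tau) (Cmp (Tns Tau (Idn 1)) (Tns (Idn 1) Tau)))"
| rel_bubble: "nbeq t (Cmp Cap Cup) (Sm t (Idn 0))"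
| rel_zigzag1: "nbeq t (Cmp (Tns Cap (Idn 1)) (Tns (Idn 1) Cup)) (Idn 1)"
| rel_zigzag2: "nbeq t (Cmp (Tns (Idn 1) Cap) (Tns Cup (Idn 1))) (Idn 1)"
| rel_cap_tau: "nbeq t (Cmp Cap Tau) (Zero 2 0)"
| rel_pitchfork: "nbeq t (Cmp (Tns (Idn 1) Cap) (Tns Tau (Idn 1)))
                         (Cmp (Tns Cap (Idn 1)) (Tns (Idn 1) Tau))"
| rel_dot_slide: "nbeq t (Add (Cmp (Tns X (Idn 1)) Tau) (Sm (-1) (Cmp Tau (Tns (Idn 1) X))))
                         (Add (Tns (Idn 1) (Idn 1)) (Sm (-1) (Cmp Cup Cap)))"
| rel_cap_dot: "nbeq t (Cmp Cap (Tns (Idn 1) X)) (Sm (-1) (Cmp Cap (Tns X (Idn 1))))"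

text \<open>Multivariate polynomials over k in variables x_0, x_1, ... (the paper's x_1, x_2, ...),
  as finitely supported maps from monomials (exponent vectors) to coefficients.\<close>
type_synonym 'k mpoly = "(nat \<Rightarrow>\<^sub>0 nat) \<Rightarrow>\<^sub>0 'k"

definition mvar :: "nat \<Rightarrow> 'k::comm_ring_1 mpoly" where
  "mvar i = Poly_Mapping.single (Poly_Mapping.single i 1) 1"

text \<open>x_i acting on B^n (0-indexed, i < n): 1^(i) * x * 1^(n-i-1).\<close>
definition xact :: "nat \<Rightarrow> nat \<Rightarrow> 'k nbmor" where
  "xact n i = Tns (Tns (Idn i) X) (Idn (n - Suc i))"

fun xpow :: "nat \<Rightarrow> nat \<Rightarrow> nat \<Rightarrow> 'k nbmor" where
  "xpow n i 0 = Idn n"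
| "xpow n i (Suc k) = Cmp (xact n i) (xpow n i k)"

definition monact :: "nat \<Rightarrow> (nat \<Rightarrow>\<^sub>0 nat) \<Rightarrow> 'k nbmor" where
  "monact n mo = foldr (\<lambda>i acc. Cmp (xpow n i (Poly_Mapping.lookup mo i)) acc) [0..<n] (Idn n)"

text \<open>g 1_n for a polynomial g in the variables x_0..x_(n-1).\<close>
definition polyact :: "nat \<Rightarrow> 'k::zero mpoly \<Rightarrow> 'k nbmor" where
  "polyact n g = foldr (\<lambda>mo acc. Add (Sm (Poly_Mapping.lookup g mo) (monact n mo)) acc)
                        (sorted_list_of_set (Poly_Mapping.keys g)) (Zero n n)"

text \<open>With v = u^{-1}, (u+x)/(u-x) = (1+xv)/(1-xv); the generating series
  sum_r v^r q_{r,n} is the unique power series Q in k[x][[v]] with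
  Q * prod_i (1 - x_i v) = prod_i (1 + x_i v).\<close>
definition qgen :: "nat \<Rightarrow> 'k::field mpoly fps" where
  "qgen n = (THE Q. Q * (\<Prod>i<n. 1 - fps_const (mvar i) * fps_X)
                    = (\<Prod>i<n. 1 + fps_const (mvar i) * fps_X))"

definition qpoly :: "nat \<Rightarrow> nat \<Rightarrow> 'k::field mpoly" where
  "qpoly r n = fps_nth (qgen n) r"

end

theory Submission
  imports Defs
begin

lemma nbeq_typ: "nbeq t f g \<Longrightarrow> nbtyp f = nbtyp g"
  by (induction rule: nbeq.induct) (auto simp: nbhom_def split: option.splits prod.splits)

definition nbeqA :: "'k::field nbmor \<Rightarrow> 'k nbmor \<Rightarrow> bool" where
  "nbeqA f g \<longleftrightarrow> (\<forall>t. nbeq t f g)"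

lemma equivp_nbeqA: "equivp nbeqA"
  unfolding nbeqA_def
  by (rule equivpI) (auto simp: reflp_def symp_def transp_def intro: nbeq.intros)

quotient_type (overloaded) 'k qm = "'k::field nbmor" / nbeqA
  by (rule equivp_nbeqA)

lift_definition qcmp :: "'k::field qm \<Rightarrow> 'k qm \<Rightarrow> 'k qm" (infixr "\<cdot>" 70) is Cmp
  by (auto simp: nbeqA_def intro: nbeq.cong_Cmp)
lift_definition qtns :: "'k::field qm \<Rightarrow> 'k qm \<Rightarrow> 'k qm" (infixr "\<otimes>" 75) is Tns
  by (auto simp: nbeqA_def intro: nbeq.cong_Tns)
lift_definition qadd :: "'k::field qm \<Rightarrow> 'k qm \<Rightarrow> 'k qm" (infixl "\<oplus>" 65) is Add
  by (auto simp: nbeqA_def intro: nbeq.cong_Add)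
lift_definition qsm :: "'k::field \<Rightarrow> 'k qm \<Rightarrow> 'k qm" (infixr "\<odot>" 72) is Sm
  by (auto simp: nbeqA_def intro: nbeq.cong_Sm)
lift_definition qI :: "nat \<Rightarrow> 'k::field qm" is Idn .
lift_definition qX :: "'k::field qm" is X .
lift_definition qT :: "'k::field qm" is Tau .
lift_definition qC :: "'k::field qm" is Cap .
lift_definition qU :: "'k::field qm" is Cup .
lift_definition qZ :: "nat \<Rightarrow> nat \<Rightarrow> 'k::field qm" is Zero .
lift_definition qtyp :: "'k::field qm \<Rightarrow> (nat \<times> nat) option" is nbtyp
  by (auto simp: nbeqA_def dest: nbeq_typ)

abbreviation qhom :: "nat \<Rightarrow> nat \<Rightarrow> 'k::field qm \<Rightarrow> bool" where
  "qhom n m f \<equiv> qtyp f = Some (n, m)"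

lemma qtyp_simps [simp]:
  "qtyp (qI n) = Some (n, n)"
  "qtyp qX = Some (1, 1)"
  "qtyp qT = Some (2, 2)"
  "qtyp qC = Some (2, 0)"
  "qtyp qU = Some (0, 2)"
  "qtyp (qZ n m) = Some (n, m)"
  "qtyp (c \<odot> f) = qtyp f"
  by (transfer, simp)+

lemma qtyp_cmp: "qtyp f = Some (n, m) \<Longrightarrow> qtyp g = Some (m, p) \<Longrightarrow> qtyp (g \<cdot> f) = Some (n, p)"
  by transfer simp
lemma qtyp_tns: "qtyp f = Some (n, m) \<Longrightarrow> qtyp g = Some (n', m') \<Longrightarrow> qtyp (f \<otimes> g) = Some (n + n', m + m')"
  by transfer simp
lemma qtyp_add: "qtyp f = Some (n, m) \<Longrightarrow> qtyp g = Some (n, m) \<Longrightarrow> qtyp (f \<oplus> g) = Some (n, m)"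
  by transfer simp

lemma qtyp_cmp_Some: "qtyp (g \<cdot> f) = Some (n, p) \<Longrightarrow> \<exists>m. qtyp f = Some (n, m) \<and> qtyp g = Some (m, p)"
  by transfer (auto split: option.splits prod.splits if_splits)
lemma qtyp_tns_Some: "qtyp (f \<otimes> g) = Some (n, m) \<Longrightarrow>
   \<exists>a b c d. qtyp f = Some (a, b) \<and> qtyp g = Some (c, d) \<and> n = a + c \<and> m = b + d"
  by transfer (auto split: option.splits prod.splits if_splits)
lemma qtyp_add_Some: "qtyp (f \<oplus> g) = Some (n, m) \<Longrightarrow> qtyp f = Some (n, m) \<and> qtyp g = Some (n, m)"
  by transfer (auto split: if_splits)

lemmas qtyp_intros = qtyp_cmp qtyp_tns qtyp_add

lemma q_eqI: "(\<And>t. nbeq t f g) \<Longrightarrow> abs_qm f = abs_qm g"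
  by (simp add: nbeqA_def qm.abs_eq_iff)

lemma q_add_assoc: "qhom n m f \<Longrightarrow> qhom n m g \<Longrightarrow> qhom n m h \<Longrightarrow> (f \<oplus> g) \<oplus> h = f \<oplus> (g \<oplus> h)"
  by transfer (auto simp: nbeqA_def nbhom_def intro: nbeq.add_assoc)
lemma q_add_comm: "qhom n m f \<Longrightarrow> qhom n m g \<Longrightarrow> f \<oplus> g = g \<oplus> f"
  by transfer (auto simp: nbeqA_def nbhom_def intro: nbeq.add_comm)
lemma q_add_zero: "qhom n m f \<Longrightarrow> f \<oplus> qZ n m = f"
  by transfer (auto simp: nbeqA_def nbhom_def intro: nbeq.add_zero)
lemma q_add_neg: "qhom n m f \<Longrightarrow> f \<oplus> ((-1) \<odot> f) = qZ n m"
  by transfer (auto simp: nbeqA_def nbhom_def intro: nbeq.add_neg)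
lemma q_sm_one: "qhom n m f \<Longrightarrow> 1 \<odot> f = f"
  by transfer (auto simp: nbeqA_def nbhom_def intro: nbeq.sm_one)
lemma q_sm_sm: "qhom n m f \<Longrightarrow> a \<odot> (b \<odot> f) = (a * b) \<odot> f"
  by transfer (auto simp: nbeqA_def nbhom_def intro: nbeq.sm_sm)
lemma q_sm_add_scalar: "qhom n m f \<Longrightarrow> (a + b) \<odot> f = (a \<odot> f) \<oplus> (b \<odot> f)"
  by transfer (auto simp: nbeqA_def nbhom_def intro: nbeq.sm_add_scalar)
lemma q_sm_add: "qhom n m f \<Longrightarrow> qhom n m g \<Longrightarrow> a \<odot> (f \<oplus> g) = (a \<odot> f) \<oplus> (a \<odot> g)"
  by transfer (auto simp: nbeqA_def nbhom_def intro: nbeq.sm_add)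
lemma q_cmp_add_r: "qhom n m f \<Longrightarrow> qhom n m g \<Longrightarrow> qhom m p h \<Longrightarrow> h \<cdot> (f \<oplus> g) = (h \<cdot> f) \<oplus> (h \<cdot> g)"
  by transfer (auto simp: nbeqA_def nbhom_def intro: nbeq.cmp_add_r)
lemma q_cmp_add_l: "qhom n m f \<Longrightarrow> qhom n m g \<Longrightarrow> qhom p n h \<Longrightarrow> (f \<oplus> g) \<cdot> h = (f \<cdot> h) \<oplus> (g \<cdot> h)"
  by transfer (auto simp: nbeqA_def nbhom_def intro: nbeq.cmp_add_l)
lemma q_cmp_sm_r: "qhom n m f \<Longrightarrow> qhom m p h \<Longrightarrow> h \<cdot> (a \<odot> f) = a \<odot> (h \<cdot> f)"
  by transfer (auto simp: nbeqA_def nbhom_def intro: nbeq.cmp_sm_r)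
lemma q_cmp_sm_l: "qhom n m f \<Longrightarrow> qhom p n h \<Longrightarrow> (a \<odot> f) \<cdot> h = a \<odot> (f \<cdot> h)"
  by transfer (auto simp: nbeqA_def nbhom_def intro: nbeq.cmp_sm_l)
lemma q_tns_add_r: "qhom n m f \<Longrightarrow> qhom n m g \<Longrightarrow> qhom p q h \<Longrightarrow> h \<otimes> (f \<oplus> g) = (h \<otimes> f) \<oplus> (h \<otimes> g)"
  by transfer (auto simp: nbeqA_def nbhom_def intro: nbeq.tns_add_r)
lemma q_tns_add_l: "qhom n m f \<Longrightarrow> qhom n m g \<Longrightarrow> qhom p q h \<Longrightarrow> (f \<oplus> g) \<otimes> h = (f \<otimes> h) \<oplus> (g \<otimes> h)"
  by transfer (auto simp: nbeqA_def nbhom_def intro: nbeq.tns_add_l)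
lemma q_tns_sm_r: "qhom n m f \<Longrightarrow> qhom p q h \<Longrightarrow> h \<otimes> (a \<odot> f) = a \<odot> (h \<otimes> f)"
  by transfer (auto simp: nbeqA_def nbhom_def intro: nbeq.tns_sm_r)
lemma q_tns_sm_l: "qhom n m f \<Longrightarrow> qhom p q h \<Longrightarrow> (a \<odot> f) \<otimes> h = a \<odot> (f \<otimes> h)"
  by transfer (auto simp: nbeqA_def nbhom_def intro: nbeq.tns_sm_l)
lemma q_cmp_assoc: "qhom n m f \<Longrightarrow> qhom m p g \<Longrightarrow> qhom p q h \<Longrightarrow> (h \<cdot> g) \<cdot> f = h \<cdot> (g \<cdot> f)"
  by transfer (auto simp: nbeqA_def nbhom_def intro: nbeq.cmp_assoc)
lemma q_cmp_id_l: "qhom n m f \<Longrightarrow> qI m \<cdot> f = f"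
  by transfer (auto simp: nbeqA_def nbhom_def intro: nbeq.cmp_id_l)
lemma q_cmp_id_r: "qhom n m f \<Longrightarrow> f \<cdot> qI n = f"
  by transfer (auto simp: nbeqA_def nbhom_def intro: nbeq.cmp_id_r)
lemma q_tns_assoc: "qhom n m f \<Longrightarrow> qhom n' m' g \<Longrightarrow> qhom n'' m'' h \<Longrightarrow> (f \<otimes> g) \<otimes> h = f \<otimes> (g \<otimes> h)"
  by transfer (auto simp: nbeqA_def nbhom_def intro: nbeq.tns_assoc)
lemma q_tns_unit_l: "qhom n m f \<Longrightarrow> qI 0 \<otimes> f = f"
  by transfer (auto simp: nbeqA_def nbhom_def intro: nbeq.tns_unit_l)
lemma q_tns_unit_r: "qhom n m f \<Longrightarrow> f \<otimes> qI 0 = f"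
  by transfer (auto simp: nbeqA_def nbhom_def intro: nbeq.tns_unit_r)
lemma q_tns_id: "qI a \<otimes> qI b = qI (a + b)"
  by transfer (auto simp: nbeqA_def nbhom_def intro: nbeq.tns_id)
lemma q_interchange: "qhom n m f \<Longrightarrow> qhom m p g \<Longrightarrow> qhom n' m' f' \<Longrightarrow> qhom m' p' g' \<Longrightarrow>
     (g \<cdot> f) \<otimes> (g' \<cdot> f') = (g \<otimes> g') \<cdot> (f \<otimes> f')"
  by transfer (auto simp: nbeqA_def nbhom_def intro: nbeq.interchange)
lemma q_nil: "qT \<cdot> qT = qZ 2 2"
  by transfer (simp add: nbeqA_def nbeq.rel_nil[unfolded One_nat_def])
lemma q_braid: "(qT \<otimes> qI 1) \<cdot> (qI 1 \<otimes> qT) \<cdot> (qT \<otimes> qI 1) = (qI 1 \<otimes> qT) \<cdot> (qT \<otimes> qI 1) \<cdot> (qI 1 \<otimes> qT)"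
  by transfer (simp add: nbeqA_def nbeq.rel_braid[unfolded One_nat_def])
lemma q_zigzag1: "(qC \<otimes> qI 1) \<cdot> (qI 1 \<otimes> qU) = qI 1"
  by transfer (simp add: nbeqA_def nbeq.rel_zigzag1[unfolded One_nat_def])
lemma q_zigzag2: "(qI 1 \<otimes> qC) \<cdot> (qU \<otimes> qI 1) = qI 1"
  by transfer (simp add: nbeqA_def nbeq.rel_zigzag2[unfolded One_nat_def])
lemma q_cap_tau: "qC \<cdot> qT = qZ 2 0"
  by transfer (simp add: nbeqA_def nbeq.rel_cap_tau[unfolded One_nat_def])
lemma q_pitchfork: "(qI 1 \<otimes> qC) \<cdot> (qT \<otimes> qI 1) = (qC \<otimes> qI 1) \<cdot> (qI 1 \<otimes> qT)"
  by transfer (simp add: nbeqA_def nbeq.rel_pitchfork[unfolded One_nat_def])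
lemma q_dot_slide: "((qX \<otimes> qI 1) \<cdot> qT) \<oplus> ((-1) \<odot> (qT \<cdot> (qI 1 \<otimes> qX))) = (qI 1 \<otimes> qI 1) \<oplus> ((-1) \<odot> (qU \<cdot> qC))"
  by transfer (simp add: nbeqA_def nbeq.rel_dot_slide[unfolded One_nat_def])
lemma q_cap_dot: "qC \<cdot> (qI 1 \<otimes> qX) = (-1) \<odot> (qC \<cdot> (qX \<otimes> qI 1))"
  by transfer (simp add: nbeqA_def nbeq.rel_cap_dot[unfolded One_nat_def])


lemma q_sm_zero: "qhom n m f \<Longrightarrow> 0 \<odot> f = qZ n m"
proof -
  assume h: "qhom n m f"
  have "0 \<odot> f = (1 + (-1)) \<odot> f" by simp
  also have "\<dots> = (1 \<odot> f) \<oplus> ((-1) \<odot> f)" using h by (rule q_sm_add_scalar)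
  also have "\<dots> = qZ n m" using h by (simp add: q_sm_one q_add_neg)
  finally show ?thesis .
qed

lemma q_zero_add: "qhom n m f \<Longrightarrow> qZ n m \<oplus> f = f"
  by (subst q_add_comm[where n=n and m=m]) (simp_all add: q_add_zero)

lemma q_sm_Z: "c \<odot> qZ n m = qZ n m"
proof -
  have z: "qZ n m = 0 \<odot> qZ n m" by (simp add: q_sm_zero)
  from z have "c \<odot> qZ n m = c \<odot> (0 \<odot> qZ n m)" by (rule arg_cong)
  also have "\<dots> = (c * 0) \<odot> qZ n m" by (rule q_sm_sm) simp
  also have "\<dots> = qZ n m" by (simp add: q_sm_zero)
  finally show ?thesis .
qed

lemma q_cmp_Z_l: "qhom p n h \<Longrightarrow> qZ n m \<cdot> h = qZ p m"
proof -
  assume h: "qhom p n h"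
  have "qZ n m \<cdot> h = (0 \<odot> qZ n m) \<cdot> h" by (simp add: q_sm_zero)
  also have "\<dots> = 0 \<odot> (qZ n m \<cdot> h)" using h by (simp add: q_cmp_sm_l)
  also have "\<dots> = qZ p m" using h by (simp add: q_sm_zero qtyp_cmp)
  finally show ?thesis .
qed

lemma q_cmp_Z_r: "qhom m p h \<Longrightarrow> h \<cdot> qZ n m = qZ n p"
proof -
  assume h: "qhom m p h"
  have "h \<cdot> qZ n m = h \<cdot> (0 \<odot> qZ n m)" by (simp add: q_sm_zero)
  also have "\<dots> = 0 \<odot> (h \<cdot> qZ n m)" using h by (simp add: q_cmp_sm_r)
  also have "\<dots> = qZ n p" using h by (simp add: q_sm_zero qtyp_cmp)
  finally show ?thesis .
qed

lemma q_tns_Z_l: "qhom p q h \<Longrightarrow> qZ n m \<otimes> h = qZ (n + p) (m + q)"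
proof -
  assume h: "qhom p q h"
  have "qZ n m \<otimes> h = (0 \<odot> qZ n m) \<otimes> h" by (simp add: q_sm_zero)
  also have "\<dots> = 0 \<odot> (qZ n m \<otimes> h)" using h by (simp add: q_tns_sm_l)
  also have "\<dots> = qZ (n + p) (m + q)" using h by (simp add: q_sm_zero qtyp_tns)
  finally show ?thesis .
qed

lemma q_tns_Z_r: "qhom p q h \<Longrightarrow> h \<otimes> qZ n m = qZ (p + n) (q + m)"
proof -
  assume h: "qhom p q h"
  have "h \<otimes> qZ n m = h \<otimes> (0 \<odot> qZ n m)" by (simp add: q_sm_zero)
  also have "\<dots> = 0 \<odot> (h \<otimes> qZ n m)" using h by (simp add: q_tns_sm_r)
  also have "\<dots> = qZ (p + n) (q + m)" using h by (simp add: q_sm_zero qtyp_tns)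
  finally show ?thesis .
qed

lemma q_Z_Z_add: "qZ n m \<oplus> qZ n m = qZ n m"
  by (simp add: q_add_zero)

lemma q_sm_add_gen: "qhom n m f \<Longrightarrow> qhom n m g \<Longrightarrow> a \<odot> (f \<oplus> g) = (a \<odot> f) \<oplus> (a \<odot> g)"
  by (rule q_sm_add)

lemma q_add_left_comm: "qhom n m f \<Longrightarrow> qhom n m g \<Longrightarrow> qhom n m h \<Longrightarrow> f \<oplus> (g \<oplus> h) = g \<oplus> (f \<oplus> h)"
proof -
  assume a: "qhom n m f" "qhom n m g" "qhom n m h"
  have "f \<oplus> (g \<oplus> h) = (f \<oplus> g) \<oplus> h" using a by (simp add: q_add_assoc)
  also have "f \<oplus> g = g \<oplus> f" by (rule q_add_comm[where n=n and m=m]) (simp_all add: a)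
  also have "(g \<oplus> f) \<oplus> h = g \<oplus> (f \<oplus> h)" using a by (simp add: q_add_assoc)
  finally show ?thesis .
qed

lemma q_add_swap4: "qhom n m a \<Longrightarrow> qhom n m b \<Longrightarrow> qhom n m c \<Longrightarrow> qhom n m d \<Longrightarrow>
   (a \<oplus> b) \<oplus> (c \<oplus> d) = (a \<oplus> c) \<oplus> (b \<oplus> d)"
proof -
  assume h: "qhom n m a" "qhom n m b" "qhom n m c" "qhom n m d"
  have "(a \<oplus> b) \<oplus> (c \<oplus> d) = a \<oplus> (b \<oplus> (c \<oplus> d))" using h by (simp add: q_add_assoc qtyp_add)
  also have "b \<oplus> (c \<oplus> d) = c \<oplus> (b \<oplus> d)" by (rule q_add_left_comm[where n=n and m=m]) (simp_all add: h)
  also have "a \<oplus> (c \<oplus> (b \<oplus> d)) = (a \<oplus> c) \<oplus> (b \<oplus> d)" using h by (simp add: q_add_assoc qtyp_add)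
  finally show ?thesis .
qed

lemma q_sm_mult: "qhom n m f \<Longrightarrow> (a * b) \<odot> f = a \<odot> (b \<odot> f)"
  by (simp add: q_sm_sm)

lemma q_neg_neg: "qhom n m f \<Longrightarrow> (-1) \<odot> ((-1) \<odot> f) = f"
  by (simp add: q_sm_sm q_sm_one)

definition qproj :: "nat \<Rightarrow> nat \<Rightarrow> 'k::field qm \<Rightarrow> 'k qm" where
  "qproj n m a = (if qhom n m a then a else qZ n m)"

lemma qproj_typ [simp]: "qhom n m (qproj n m a)"
  by (simp add: qproj_def)

lemma qproj_id [simp]: "qhom n m a \<Longrightarrow> qproj n m a = a"
  by (simp add: qproj_def)

definition qstep :: "nat \<Rightarrow> nat \<Rightarrow> ('a \<Rightarrow> 'k::field qm) \<Rightarrow> 'a \<Rightarrow> 'k qm \<Rightarrow> 'k qm" where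
  "qstep n m F x acc = qproj n m (F x) \<oplus> qproj n m acc"

lemma qstep_typ: "qhom n m (qstep n m F x acc)"
  by (simp add: qstep_def qtyp_add)

lemma comp_fun_commute_qstep: "comp_fun_commute (qstep n m F)"
proof
  fix x y
  show "qstep n m F y \<circ> qstep n m F x = qstep n m F x \<circ> qstep n m F y"
  proof
    fix acc
    have "(qstep n m F y \<circ> qstep n m F x) acc = qproj n m (F y) \<oplus> (qproj n m (F x) \<oplus> qproj n m acc)"
      by (simp add: qstep_def qtyp_add)
    also have "\<dots> = qproj n m (F x) \<oplus> (qproj n m (F y) \<oplus> qproj n m acc)"
      by (rule q_add_left_comm[where n=n and m=m]) simp_all
    also have "\<dots> = (qstep n m F x \<circ> qstep n m F y) acc"
      by (simp add: qstep_def qtyp_add)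
    finally show "(qstep n m F y \<circ> qstep n m F x) acc = (qstep n m F x \<circ> qstep n m F y) acc" .
  qed
qed

definition qsum :: "nat \<Rightarrow> nat \<Rightarrow> ('a \<Rightarrow> 'k::field qm) \<Rightarrow> 'a set \<Rightarrow> 'k qm" where
  "qsum n m F S = Finite_Set.fold (qstep n m F) (qZ n m) S"

lemma qsum_empty [simp]: "qsum n m F {} = qZ n m"
  by (simp add: qsum_def)

lemma qsum_infinite: "\<not> finite S \<Longrightarrow> qsum n m F S = qZ n m"
  by (simp add: qsum_def)

lemma qsum_insert_raw: "finite S \<Longrightarrow> x \<notin> S \<Longrightarrow> qsum n m F (insert x S) = qstep n m F x (qsum n m F S)"
proof -
  assume a: "finite S" "x \<notin> S"
  interpret comp_fun_commute "qstep n m F" by (rule comp_fun_commute_qstep)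
  show ?thesis unfolding qsum_def using a by (rule fold_insert)
qed

lemma qsum_typ [simp]: "qtyp (qsum n m F S) = Some (n, m)"
proof (cases "finite S")
  case True
  then show ?thesis
    by (induction S rule: finite_induct) (auto simp: qsum_insert_raw qstep_typ)
next
  case False
  then show ?thesis by (simp add: qsum_infinite)
qed

lemma qsum_insert: "finite S \<Longrightarrow> x \<notin> S \<Longrightarrow> qhom n m (F x) \<Longrightarrow>
   qsum n m F (insert x S) = F x \<oplus> qsum n m F S"
  by (simp add: qsum_insert_raw qstep_def)

lemma qsum_cong: "(\<And>x. x \<in> S \<Longrightarrow> F x = G x) \<Longrightarrow> qsum n m F S = qsum n m G S"
proof (cases "finite S")
  case True
  assume "\<And>x. x \<in> S \<Longrightarrow> F x = G x"
  with True show ?thesis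
    by (induction S rule: finite_induct) (auto simp: qsum_insert_raw qstep_def)
next
  case False
  then show ?thesis by (simp add: qsum_infinite)
qed

lemma qsum_single [simp]: "qhom n m (F x) \<Longrightarrow> qsum n m F {x} = F x"
  using qsum_insert[of "{}" x F n m, simplified] by (simp add: q_add_zero)

lemma qsum_Z: "(\<And>x. x \<in> S \<Longrightarrow> F x = qZ n m) \<Longrightarrow> qsum n m F S = qZ n m"
proof (cases "finite S")
  case True
  assume "\<And>x. x \<in> S \<Longrightarrow> F x = qZ n m"
  with True show ?thesis
    by (induction S rule: finite_induct) (auto simp: qsum_insert q_add_zero)
next
  case False
  then show ?thesis by (simp add: qsum_infinite)
qed

lemma qsum_add: "(\<And>x. x \<in> S \<Longrightarrow> qhom n m (F x)) \<Longrightarrow> (\<And>x. x \<in> S \<Longrightarrow> qhom n m (G x)) \<Longrightarrow>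
  qsum n m (\<lambda>x. F x \<oplus> G x) S = qsum n m F S \<oplus> qsum n m G S"
proof (cases "finite S")
  case True
  assume "\<And>x. x \<in> S \<Longrightarrow> qhom n m (F x)" "\<And>x. x \<in> S \<Longrightarrow> qhom n m (G x)"
  with True show ?thesis
    by (induction S rule: finite_induct) (auto simp: qsum_insert q_add_zero qtyp_add intro: q_add_swap4)
next
  case False
  then show ?thesis by (simp add: qsum_infinite q_add_zero)
qed

lemma qsum_union: "finite A \<Longrightarrow> finite B \<Longrightarrow> A \<inter> B = {} \<Longrightarrow>
  (\<And>x. x \<in> A \<Longrightarrow> qhom n m (F x)) \<Longrightarrow>
  qsum n m F (A \<union> B) = qsum n m F A \<oplus> qsum n m F B"
proof (induction A rule: finite_induct)
  case empty
  then show ?case by (simp add: q_zero_add)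
next
  case (insert x A)
  then show ?case by (simp add: qsum_insert q_add_assoc)
qed

lemma qsum_reindex: "inj_on h S \<Longrightarrow> qsum n m F (h ` S) = qsum n m (F \<circ> h) S"
proof (cases "finite S")
  case True
  assume "inj_on h S"
  with True show ?thesis
  proof (induction S rule: finite_induct)
    case empty
    then show ?case by simp
  next
    case (insert x S)
    then have "h x \<notin> h ` S" by auto
    with insert show ?case by (simp add: qsum_insert_raw qstep_def)
  qed
next
  case False
  assume "inj_on h S"
  with False have "\<not> finite (h ` S)" using finite_imageD by blast
  with False show ?thesis by (simp add: qsum_infinite)
qed

lemma qsum_cmp_l: "(\<And>x. x \<in> S \<Longrightarrow> qhom n m (F x)) \<Longrightarrow> qhom m p g \<Longrightarrow>
  g \<cdot> qsum n m F S = qsum n p (\<lambda>x. g \<cdot> F x) S"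
proof (cases "finite S")
  case True
  assume "\<And>x. x \<in> S \<Longrightarrow> qhom n m (F x)" "qhom m p g"
  with True show ?thesis
    by (induction S rule: finite_induct) (auto simp: qsum_insert q_cmp_Z_r q_cmp_add_r qtyp_cmp)
next
  case False
  assume "qhom m p g"
  with False show ?thesis by (simp add: qsum_infinite q_cmp_Z_r)
qed

lemma qsum_cmp_r: "(\<And>x. x \<in> S \<Longrightarrow> qhom m p (F x)) \<Longrightarrow> qhom n m g \<Longrightarrow>
  qsum m p F S \<cdot> g = qsum n p (\<lambda>x. F x \<cdot> g) S"
proof (cases "finite S")
  case True
  assume "\<And>x. x \<in> S \<Longrightarrow> qhom m p (F x)" "qhom n m g"
  with True show ?thesis
    by (induction S rule: finite_induct) (auto simp: qsum_insert q_cmp_Z_l q_cmp_add_l qtyp_cmp)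
next
  case False
  assume "qhom n m g"
  with False show ?thesis by (simp add: qsum_infinite q_cmp_Z_l)
qed

lemma qsum_tns_l: "(\<And>x. x \<in> S \<Longrightarrow> qhom n m (F x)) \<Longrightarrow> qhom p q g \<Longrightarrow>
  g \<otimes> qsum n m F S = qsum (p + n) (q + m) (\<lambda>x. g \<otimes> F x) S"
proof (cases "finite S")
  case True
  assume "\<And>x. x \<in> S \<Longrightarrow> qhom n m (F x)" "qhom p q g"
  with True show ?thesis
    by (induction S rule: finite_induct) (auto simp: qsum_insert q_tns_Z_r q_tns_add_r qtyp_tns)
next
  case False
  assume "qhom p q g"
  with False show ?thesis by (simp add: qsum_infinite q_tns_Z_r)
qed

lemma qsum_tns_r: "(\<And>x. x \<in> S \<Longrightarrow> qhom n m (F x)) \<Longrightarrow> qhom p q g \<Longrightarrow>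
  qsum n m F S \<otimes> g = qsum (n + p) (m + q) (\<lambda>x. F x \<otimes> g) S"
proof (cases "finite S")
  case True
  assume "\<And>x. x \<in> S \<Longrightarrow> qhom n m (F x)" "qhom p q g"
  with True show ?thesis
    by (induction S rule: finite_induct) (auto simp: qsum_insert q_tns_Z_l q_tns_add_l qtyp_tns)
next
  case False
  assume "qhom p q g"
  with False show ?thesis by (simp add: qsum_infinite q_tns_Z_l)
qed

lemma qsum_sm: "(\<And>x. x \<in> S \<Longrightarrow> qhom n m (F x)) \<Longrightarrow>
  c \<odot> qsum n m F S = qsum n m (\<lambda>x. c \<odot> F x) S"
proof (cases "finite S")
  case True
  assume "\<And>x. x \<in> S \<Longrightarrow> qhom n m (F x)"
  with True show ?thesis
    by (induction S rule: finite_induct) (auto simp: qsum_insert q_sm_Z q_sm_add)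
next
  case False
  with False show ?thesis by (simp add: qsum_infinite q_sm_Z)
qed

lemma sm_sum_qsum: "qhom n m f \<Longrightarrow> (sum c S) \<odot> f = qsum n m (\<lambda>x. c x \<odot> f) S"
proof (cases "finite S")
  case True
  assume "qhom n m f"
  with True show ?thesis
    by (induction S rule: finite_induct) (auto simp: qsum_insert q_sm_zero q_sm_add_scalar)
next
  case False
  assume "qhom n m f"
  with False show ?thesis by (simp add: qsum_infinite q_sm_zero)
qed

lemma qsum_Sigma: "finite A \<Longrightarrow> (\<And>x. x \<in> A \<Longrightarrow> finite (B x)) \<Longrightarrow>
  (\<And>x y. x \<in> A \<Longrightarrow> y \<in> B x \<Longrightarrow> qhom n m (F x y)) \<Longrightarrow>
  qsum n m (\<lambda>x. qsum n m (F x) (B x)) A = qsum n m (\<lambda>(x, y). F x y) (Sigma A B)"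
proof (induction A rule: finite_induct)
  case empty
  then show ?case by simp
next
  case (insert a A)
  have eq: "Sigma (insert a A) B = ((\<lambda>y. (a, y)) ` B a) \<union> Sigma A B" by auto
  have "qsum n m (\<lambda>(x, y). F x y) (Sigma (insert a A) B)
       = qsum n m (\<lambda>(x, y). F x y) ((\<lambda>y. (a, y)) ` B a) \<oplus> qsum n m (\<lambda>(x, y). F x y) (Sigma A B)"
    unfolding eq using insert by (intro qsum_union) auto
  also have "qsum n m (\<lambda>(x, y). F x y) ((\<lambda>y. (a, y)) ` B a) = qsum n m (F a) (B a)"
    by (subst qsum_reindex) (auto simp: inj_on_def comp_def)
  finally show ?case using insert by (simp add: qsum_insert)
qed

lemma qsum_swap: "finite A \<Longrightarrow> finite B \<Longrightarrow> (\<And>x y. x \<in> A \<Longrightarrow> y \<in> B \<Longrightarrow> qhom n m (F x y)) \<Longrightarrow>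
  qsum n m (\<lambda>x. qsum n m (F x) B) A = qsum n m (\<lambda>y. qsum n m (\<lambda>x. F x y) A) B"
proof -
  assume fin: "finite A" "finite B" and ty: "\<And>x y. x \<in> A \<Longrightarrow> y \<in> B \<Longrightarrow> qhom n m (F x y)"
  have "qsum n m (\<lambda>x. qsum n m (F x) B) A = qsum n m (\<lambda>(x, y). F x y) (A \<times> B)"
    using fin ty by (intro qsum_Sigma) auto
  also have "A \<times> B = (\<lambda>(y, x). (x, y)) ` (B \<times> A)" by auto
  also have "qsum n m (\<lambda>(x, y). F x y) \<dots> = qsum n m (\<lambda>(y, x). F x y) (B \<times> A)"
    by (subst qsum_reindex) (auto simp: inj_on_def comp_def intro!: qsum_cong)
  also have "\<dots> = qsum n m (\<lambda>y. qsum n m (\<lambda>x. F x y) A) B"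
    using fin ty by (intro qsum_Sigma[symmetric]) auto
  finally show ?thesis .
qed

lemma qsum_delta: "finite S \<Longrightarrow> a \<in> S \<Longrightarrow> qhom n m (F a) \<Longrightarrow>
   qsum n m (\<lambda>x. if x = a then F x else qZ n m) S = F a"
proof -
  assume fin: "finite S" and a: "a \<in> S" and ty: "qhom n m (F a)"
  have "S = insert a (S - {a})" using a by auto
  then have "qsum n m (\<lambda>x. if x = a then F x else qZ n m) S
      = qsum n m (\<lambda>x. if x = a then F x else qZ n m) (insert a (S - {a}))" by simp
  also have "\<dots> = F a \<oplus> qsum n m (\<lambda>x. if x = a then F x else qZ n m) (S - {a})"
    using fin ty by (subst qsum_insert) auto
  also have "qsum n m (\<lambda>x. if x = a then F x else qZ n m) (S - {a}) = qZ n m"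
    by (rule qsum_Z) auto
  finally show ?thesis using ty by (simp add: q_add_zero)
qed

lemma qsum_foldr: "distinct xs \<Longrightarrow> (\<And>x. x \<in> set xs \<Longrightarrow> qhom n m (F x)) \<Longrightarrow>
  foldr (\<lambda>x acc. F x \<oplus> acc) xs (qZ n m) = qsum n m F (set xs)"
  by (induction xs) (auto simp: qsum_insert)


declare One_nat_def [simp del]

lemma abs_simps:
  "abs_qm (Cmp g f) = abs_qm g \<cdot> abs_qm f"
  "abs_qm (Tns f g) = abs_qm f \<otimes> abs_qm g"
  "abs_qm (Add f g) = abs_qm f \<oplus> abs_qm g"
  "abs_qm (Sm c f) = c \<odot> abs_qm f"
  "abs_qm (Idn n) = qI n"
  "abs_qm X = qX"
  "abs_qm Tau = qT"
  "abs_qm Cap = qC"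
  "abs_qm Cup = qU"
  "abs_qm (Zero n m) = qZ n m"
  by (simp_all add: qcmp.abs_eq qtns.abs_eq qadd.abs_eq qsm.abs_eq qI.abs_eq qX.abs_eq qT.abs_eq
      qC.abs_eq qU.abs_eq qZ.abs_eq)

lemma qtyp_abs: "qtyp (abs_qm f) = nbtyp f"
  by (simp add: qtyp.abs_eq)

fun qXp :: "nat \<Rightarrow> 'k::field qm" where
  "qXp 0 = qI 1"
| "qXp (Suc k) = qX \<cdot> qXp k"

lemma qXp_typ [simp]: "qtyp (qXp k) = Some (1, 1)"
  by (induction k) (auto intro: qtyp_cmp)

lemma qXp_add: "qXp a \<cdot> qXp b = qXp (a + b)"
  by (induction a) (simp_all add: q_cmp_id_l q_cmp_assoc[where n=1 and m=1 and p=1 and q=1])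

lemma qXp_one: "qXp 1 = qX"
proof -
  have "qX \<cdot> qI 1 = qX" by (rule q_cmp_id_r[where n=1 and m=1]) simp
  then show ?thesis by (simp add: One_nat_def)
qed

lemma qX_id [simp]: "qX \<cdot> qI 1 = qX"
  by (rule q_cmp_id_r[where n=1 and m=1]) simp

lemma qX_comm: "qX \<cdot> qXp k = qXp k \<cdot> qX"
proof -
  have "qX \<cdot> qXp k = qXp 1 \<cdot> qXp k" by (simp only: qXp_one)
  also have "\<dots> = qXp (k + 1)" using qXp_add[of 1 k] by (simp only: add.commute)
  also have "\<dots> = qXp k \<cdot> qXp 1" by (simp only: qXp_add)
  finally show ?thesis by (simp only: qXp_one)
qed

lemma tns_id3: "(qI a \<otimes> qI b) \<otimes> qI c = qI (a + b + c)"
  by (simp add: q_tns_id)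

lemma xact_abs: "abs_qm (xact n i) = (qI i \<otimes> qX) \<otimes> qI (n - Suc i)"
  by (simp add: xact_def abs_simps)

lemma xpow_abs': "i < n \<Longrightarrow> abs_qm (xpow n i k :: 'k::field nbmor) = (qI i \<otimes> qXp k) \<otimes> qI (n - Suc i)"
proof (induction k)
  case 0
  then show ?case by (simp add: abs_simps tns_id3)
next
  case (Suc k)
  have "abs_qm (xpow n i (Suc k) :: 'k nbmor) = ((qI i \<otimes> qX) \<otimes> qI (n - Suc i)) \<cdot> ((qI i \<otimes> qXp k) \<otimes> qI (n - Suc i))"
    by (simp only: xpow.simps abs_simps xact_abs Suc.IH[OF Suc.prems])
  also have "\<dots> = ((qI i \<otimes> qX) \<cdot> (qI i \<otimes> qXp k)) \<otimes> (qI (n - Suc i) \<cdot> qI (n - Suc i))"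
    by (rule q_interchange[symmetric]) (auto intro!: qtyp_tns)
  also have "\<dots> = (qI i \<otimes> qXp (Suc k)) \<otimes> qI (n - Suc i)"
    by (simp add: q_interchange[symmetric] q_cmp_id_l)
  finally show ?case .
qed

lemma xpow_typ: "i < n \<Longrightarrow> qhom n n (abs_qm (xpow n i k))"
  by (simp add: xpow_abs' qtyp_tns)

lemma xpow_Suc_abs: "i < n \<Longrightarrow> abs_qm (xpow (Suc n) i k :: 'k::field nbmor) = abs_qm (xpow n i k) \<otimes> qI 1"
proof -
  assume i: "i < n"
  have "abs_qm (xpow (Suc n) i k :: 'k nbmor) = (qI i \<otimes> qXp k) \<otimes> (qI (n - Suc i) \<otimes> qI 1)"
    using i by (simp add: xpow_abs' q_tns_id Suc_diff_Suc)
  also have "\<dots> = ((qI i \<otimes> qXp k) \<otimes> qI (n - Suc i)) \<otimes> qI 1"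
    by (rule q_tns_assoc[symmetric]) (auto intro: qtyp_tns)
  also have "\<dots> = abs_qm (xpow n i k) \<otimes> qI 1"
    using i by (simp add: xpow_abs')
  finally show ?thesis .
qed

lemma xpow_last_abs: "abs_qm (xpow (Suc n) n k) = qI n \<otimes> qXp k"
  by (simp add: xpow_abs' q_tns_unit_r qtyp_tns)

definition mfold :: "nat \<Rightarrow> (nat \<Rightarrow>\<^sub>0 nat) \<Rightarrow> nat list \<Rightarrow> 'k::field qm \<Rightarrow> 'k qm" where
  "mfold n mo L base = foldr (\<lambda>i acc. abs_qm (xpow n i (Poly_Mapping.lookup mo i)) \<cdot> acc) L base"

lemma foldr_abs: "abs_qm (foldr (\<lambda>i acc. Cmp (xpow n i (Poly_Mapping.lookup mo i)) acc) L base) = mfold n mo L (abs_qm base)"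
  by (induction L) (simp_all add: mfold_def abs_simps)

lemma monact_abs: "abs_qm (monact n mo) = mfold n mo [0..<n] (qI n)"
  by (simp add: monact_def foldr_abs abs_simps)

lemma mfold_typ: "(\<forall>i\<in>set L. i < n) \<Longrightarrow> qhom n n base \<Longrightarrow> qhom n n (mfold n mo L base)"
  by (induction L) (auto simp: mfold_def intro!: qtyp_cmp xpow_typ)

lemma mfold_Suc: "(\<forall>i\<in>set L. i < n) \<Longrightarrow> qhom n n A \<Longrightarrow> qhom 1 1 B \<Longrightarrow>
   mfold (Suc n) mo L (A \<otimes> B) = mfold n mo L A \<otimes> B"
proof (induction L)
  case Nil
  then show ?case by (simp add: mfold_def)
next
  case (Cons i L)
  then have i: "i < n" and L: "\<forall>i\<in>set L. i < n" by auto
  have "mfold (Suc n) mo (i # L) (A \<otimes> B) = (abs_qm (xpow n i (Poly_Mapping.lookup mo i)) \<otimes> qI 1) \<cdot> (mfold n mo L A \<otimes> B)"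
    using Cons i L by (simp add: mfold_def xpow_Suc_abs)
  also have "\<dots> = (abs_qm (xpow n i (Poly_Mapping.lookup mo i)) \<cdot> mfold n mo L A) \<otimes> (qI 1 \<cdot> B)"
    by (rule q_interchange[symmetric, where n=n and m=n and p=n and n'=1 and m'=1 and p'=1])
       (simp_all add: xpow_typ[OF i] mfold_typ[OF L] Cons.prems)
  also have "\<dots> = mfold n mo (i # L) A \<otimes> B"
    using Cons by (simp add: mfold_def q_cmp_id_l)
  finally show ?case .
qed

lemma monact_Suc_abs: "abs_qm (monact (Suc n) mo :: 'k::field nbmor) = abs_qm (monact n mo) \<otimes> qXp (Poly_Mapping.lookup mo n)"
proof -
  have "abs_qm (monact (Suc n) mo :: 'k nbmor) = mfold (Suc n) mo [0..<n] (abs_qm (xpow (Suc n) n (Poly_Mapping.lookup mo n)) \<cdot> qI (Suc n))"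
    by (simp add: monact_abs mfold_def)
  also have "abs_qm (xpow (Suc n) n (Poly_Mapping.lookup mo n) :: 'k nbmor) \<cdot> qI (Suc n) = qI n \<otimes> qXp (Poly_Mapping.lookup mo n)"
    by (simp add: xpow_last_abs q_cmp_id_r qtyp_tns)
  also have "mfold (Suc n) mo [0..<n] (qI n \<otimes> qXp (Poly_Mapping.lookup mo n)) = mfold n mo [0..<n] (qI n) \<otimes> qXp (Poly_Mapping.lookup mo n)"
    by (rule mfold_Suc) auto
  finally show ?thesis by (simp add: monact_abs)
qed

lemma monact_0_abs: "abs_qm (monact 0 mo) = qI 0"
  by (simp add: monact_abs mfold_def)

lemma monact_typ: "qhom n n (abs_qm (monact n mo))"
  by (simp add: monact_abs mfold_typ)

lemma foldr_add_abs: "abs_qm (foldr (\<lambda>mo. Add (Sm (c mo) (M mo))) L (Zero n n))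
   = foldr (\<lambda>mo acc. (c mo \<odot> abs_qm (M mo)) \<oplus> acc) L (qZ n n)"
  by (induction L) (simp_all add: abs_simps)

lemma polyact_abs: "abs_qm (polyact n g :: 'k::field nbmor) = qsum n n (\<lambda>mo. Poly_Mapping.lookup g mo \<odot> abs_qm (monact n mo)) (Poly_Mapping.keys g)"
proof -
  have "abs_qm (polyact n g :: 'k nbmor) = foldr (\<lambda>mo acc. (Poly_Mapping.lookup g mo \<odot> abs_qm (monact n mo)) \<oplus> acc)
          (sorted_list_of_set (Poly_Mapping.keys g)) (qZ n n)"
    unfolding polyact_def by (rule foldr_add_abs)
  also have "\<dots> = qsum n n (\<lambda>mo. Poly_Mapping.lookup g mo \<odot> abs_qm (monact n mo)) (set (sorted_list_of_set (Poly_Mapping.keys g)))"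
    by (rule qsum_foldr) (auto simp: monact_typ)
  finally show ?thesis by simp
qed

definition kap :: "nat \<Rightarrow> 'k::field" where
  "kap k = (if k = 0 then 1 else 2)"

fun QA :: "nat \<Rightarrow> nat \<Rightarrow> 'k::field qm" where
  "QA r 0 = (if r = 0 then qI 0 else qZ 0 0)"
| "QA r (Suc n) = qsum (Suc n) (Suc n) (\<lambda>a. kap (r - a) \<odot> (QA a n \<otimes> qXp (r - a))) {..r}"

lemma QA_typ [simp]: "qtyp (QA r n) = Some (n, n)"
  by (cases n) auto


definition Gc :: "'a::comm_ring_1 \<Rightarrow> 'a fps" where
  "Gc c = Abs_fps (\<lambda>k. if k = 0 then 1 else 2 * c ^ k)"

definition Hc :: "'a::comm_ring_1 \<Rightarrow> 'a fps" where
  "Hc c = Abs_fps (\<lambda>k. c ^ k)"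

lemma Gc_nth: "fps_nth (Gc c) k = (if k = 0 then 1 else 2 * c ^ k)"
  by (simp add: Gc_def)

lemma Gc_mult: "Gc c * (1 - fps_const c * fps_X) = 1 + fps_const c * fps_X"
proof -
  have e: "Gc c * (1 - fps_const c * fps_X) = Gc c - fps_const c * (fps_X * Gc c)"
    by (simp add: algebra_simps)
  show ?thesis
  proof (rule fps_ext)
    fix k
    show "fps_nth (Gc c * (1 - fps_const c * fps_X)) k = fps_nth (1 + fps_const c * fps_X) k"
      unfolding e
    proof (cases k)
      case 0
      then show "fps_nth (Gc c - fps_const c * (fps_X * Gc c)) k = fps_nth (1 + fps_const c * fps_X) k"
        by (simp add: Gc_nth)
    next
      case (Suc j)
      then show "fps_nth (Gc c - fps_const c * (fps_X * Gc c)) k = fps_nth (1 + fps_const c * fps_X) k"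
        by (cases j) (simp_all add: Gc_nth algebra_simps)
    qed
  qed
qed

lemma Hc_mult: "Hc c * (1 - fps_const c * fps_X) = 1"
proof -
  have e: "Hc c * (1 - fps_const c * fps_X) = Hc c - fps_const c * (fps_X * Hc c)"
    by (simp add: algebra_simps)
  show ?thesis
  proof (rule fps_ext)
    fix k
    show "fps_nth (Hc c * (1 - fps_const c * fps_X)) k = fps_nth 1 k"
      unfolding e by (cases k) (simp_all add: Hc_def)
  qed
qed

lemma qgen_eq: "qgen n = (\<Prod>i<n. Gc (mvar i :: 'k::field mpoly))"
proof -
  let ?P = "\<Prod>i<n. 1 - fps_const (mvar i :: 'k mpoly) * fps_X"
  let ?N = "\<Prod>i<n. 1 + fps_const (mvar i :: 'k mpoly) * fps_X"
  let ?G = "\<Prod>i<n. Gc (mvar i :: 'k mpoly)"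
  let ?H = "\<Prod>i<n. Hc (mvar i :: 'k mpoly)"
  have GP: "?G * ?P = ?N"
    by (simp add: prod.distrib[symmetric] Gc_mult)
  have PH: "?P * ?H = 1"
    by (subst mult.commute) (simp add: prod.distrib[symmetric] Hc_mult)
  have uniq: "Q = ?G" if "Q * ?P = ?N" for Q
  proof -
    have "Q = Q * (?P * ?H)" by (simp only: PH mult_1_right)
    also have "\<dots> = (Q * ?P) * ?H" by (simp only: mult.assoc)
    also have "\<dots> = ?N * ?H" by (simp only: that)
    also have "\<dots> = (?G * ?P) * ?H" by (simp only: GP)
    also have "\<dots> = ?G * (?P * ?H)" by (simp only: mult.assoc)
    also have "\<dots> = ?G" by (simp only: PH mult_1_right)
    finally show ?thesis .
  qed
  have "(THE Q. Q * ?P = ?N) = ?G"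
    by (rule the_equality) (rule GP, rule uniq)
  then show ?thesis unfolding qgen_def .
qed

lemma qgen_Suc: "qgen (Suc n) = qgen n * Gc (mvar n :: 'k::field mpoly)"
  by (simp add: qgen_eq)

lemma mvar_pow: "(mvar i :: 'k::field mpoly) ^ k = Poly_Mapping.single (Poly_Mapping.single i k) 1"
proof (induction k)
  case 0
  then show ?case by simp
next
  case (Suc k)
  then show ?case
    by (simp add: mvar_def mult_single single_add[symmetric] One_nat_def)
qed

lemma Gc_mvar_nth: "fps_nth (Gc (mvar i :: 'k::field mpoly)) k = Poly_Mapping.single (Poly_Mapping.single i k) (kap k)"
proof (cases "k = 0")
  case True
  then show ?thesis by (simp add: Gc_nth kap_def)
next
  case False
  have "(2::'k mpoly) * Poly_Mapping.single (Poly_Mapping.single i k) 1 = Poly_Mapping.single 0 2 * Poly_Mapping.single (Poly_Mapping.single i k) 1"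
    by (simp only: single_numeral)
  also have "\<dots> = Poly_Mapping.single (Poly_Mapping.single i k) 2"
    unfolding mult_single by simp
  finally have "(2::'k mpoly) * Poly_Mapping.single (Poly_Mapping.single i k) 1 = Poly_Mapping.single (Poly_Mapping.single i k) 2" .
  with False show ?thesis by (simp add: Gc_nth kap_def mvar_pow)
qed

lemma qpoly_0: "qpoly r 0 = (if r = 0 then 1 else (0 :: 'k::field mpoly))"
  by (simp add: qpoly_def qgen_eq)

lemma qpoly_Suc: "qpoly r (Suc n) = (\<Sum>a\<in>{..r}. qpoly a n * Poly_Mapping.single (Poly_Mapping.single n (r - a)) (kap (r - a) :: 'k::field))"
  by (simp add: qpoly_def qgen_Suc fps_mult_nth Gc_mvar_nth atLeast0AtMost)

definition vars_lt :: "nat \<Rightarrow> 'k::field mpoly \<Rightarrow> bool" where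
  "vars_lt n p \<longleftrightarrow> (\<forall>mo\<in>Poly_Mapping.keys p. \<forall>i\<ge>n. Poly_Mapping.lookup mo i = 0)"

lemma vars_lt_sum: "(\<And>a. a \<in> A \<Longrightarrow> vars_lt n (g a)) \<Longrightarrow> vars_lt n (sum g A)"
  unfolding vars_lt_def using keys_sum[of g A] by blast

lemma vars_lt_mult_single: "vars_lt n g \<Longrightarrow> vars_lt (Suc n) (g * Poly_Mapping.single (Poly_Mapping.single n k) c)"
proof -
  assume g: "vars_lt n g"
  show ?thesis unfolding vars_lt_def
  proof (intro ballI allI impI)
    fix mo i assume mo: "mo \<in> Poly_Mapping.keys (g * Poly_Mapping.single (Poly_Mapping.single n k) c)" and i: "Suc n \<le> i"
    from keys_mult[of g] mo obtain a b where ab: "mo = a + b" "a \<in> Poly_Mapping.keys g"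
        "b \<in> Poly_Mapping.keys (Poly_Mapping.single (Poly_Mapping.single n k) c)" by blast
    then have "b = Poly_Mapping.single n k" by (simp split: if_splits)
    with ab g i show "Poly_Mapping.lookup mo i = 0"
      by (simp add: vars_lt_def lookup_add lookup_single_not_eq)
  qed
qed

lemma qpoly_vars: "vars_lt n (qpoly r n :: 'k::field mpoly)"
proof (induction n arbitrary: r)
  case 0
  then show ?case by (simp add: qpoly_0 vars_lt_def)
next
  case (Suc n)
  show ?case unfolding qpoly_Suc
    by (intro vars_lt_sum vars_lt_mult_single Suc.IH)
qed

definition Mo :: "nat \<Rightarrow> (nat \<Rightarrow>\<^sub>0 nat) \<Rightarrow> 'k::field qm" where
  "Mo n mo = abs_qm (monact n mo)"

definition PA :: "nat \<Rightarrow> 'k::field mpoly \<Rightarrow> 'k qm" where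
  "PA n g = qsum n n (\<lambda>mo. Poly_Mapping.lookup g mo \<odot> Mo n mo) (Poly_Mapping.keys g)"

lemma Mo_typ [simp]: "qtyp (Mo n mo) = Some (n, n)"
  by (simp add: Mo_def monact_typ)

lemma polyact_PA: "abs_qm (polyact n g) = PA n g"
  by (simp add: polyact_abs PA_def Mo_def)

lemma PA_superset: "finite S \<Longrightarrow> Poly_Mapping.keys g \<subseteq> S \<Longrightarrow>
   PA n g = qsum n n (\<lambda>mo. Poly_Mapping.lookup g mo \<odot> Mo n mo) S"
proof -
  assume S: "finite S" "Poly_Mapping.keys g \<subseteq> S"
  have eq: "S = Poly_Mapping.keys g \<union> (S - Poly_Mapping.keys g)" using S by auto
  have "qsum n n (\<lambda>mo. Poly_Mapping.lookup g mo \<odot> Mo n mo) S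
     = PA n g \<oplus> qsum n n (\<lambda>mo. Poly_Mapping.lookup g mo \<odot> Mo n mo) (S - Poly_Mapping.keys g)"
    unfolding PA_def using S by (subst eq, intro qsum_union) auto
  also have "qsum n n (\<lambda>mo. Poly_Mapping.lookup g mo \<odot> Mo n mo) (S - Poly_Mapping.keys g) = qZ n n"
    by (rule qsum_Z) (simp add: in_keys_iff q_sm_zero)
  finally show ?thesis by (simp add: q_add_zero PA_def)
qed

lemma PA_typ [simp]: "qtyp (PA n g) = Some (n, n)"
  by (simp add: PA_def)

lemma PA_add: "PA n (g + h) = PA n g \<oplus> PA n h"
proof -
  let ?S = "Poly_Mapping.keys g \<union> Poly_Mapping.keys h"
  have "PA n (g + h) = qsum n n (\<lambda>mo. Poly_Mapping.lookup (g + h) mo \<odot> Mo n mo) ?S"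
    by (rule PA_superset) (auto simp: keys_add)
  also have "\<dots> = qsum n n (\<lambda>mo. (Poly_Mapping.lookup g mo \<odot> Mo n mo) \<oplus> (Poly_Mapping.lookup h mo \<odot> Mo n mo)) ?S"
    by (rule qsum_cong) (simp add: lookup_add q_sm_add_scalar)
  also have "\<dots> = qsum n n (\<lambda>mo. Poly_Mapping.lookup g mo \<odot> Mo n mo) ?S \<oplus> qsum n n (\<lambda>mo. Poly_Mapping.lookup h mo \<odot> Mo n mo) ?S"
    by (rule qsum_add) auto
  also have "\<dots> = PA n g \<oplus> PA n h"
    by (simp add: PA_superset[symmetric])
  finally show ?thesis .
qed

lemma PA_zero [simp]: "PA n 0 = qZ n n"
  by (simp add: PA_def)

lemma PA_sum: "finite A \<Longrightarrow> PA n (sum g A) = qsum n n (\<lambda>a. PA n (g a)) A"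
  by (induction A rule: finite_induct) (simp_all add: PA_add qsum_insert)

lemma PA_single: "PA n (Poly_Mapping.single mo c) = c \<odot> Mo n mo"
  by (cases "c = 0") (simp_all add: PA_def q_sm_zero)

lemma Mo_cong: "(\<And>i. i < n \<Longrightarrow> Poly_Mapping.lookup mo i = Poly_Mapping.lookup mo' i) \<Longrightarrow> Mo n mo = Mo n mo'"
  unfolding Mo_def monact_def by (rule arg_cong[where f=abs_qm], rule foldr_cong) auto

lemma Mo_Suc: "Mo (Suc n) mo = Mo n mo \<otimes> qXp (Poly_Mapping.lookup mo n)"
  by (simp add: Mo_def monact_Suc_abs)

lemma Mo_0: "Mo 0 mo = qI 0"
  by (simp add: Mo_def monact_0_abs)

lemma poly_expand: "g = (\<Sum>mo\<in>Poly_Mapping.keys g. Poly_Mapping.single mo (Poly_Mapping.lookup g mo))"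
  by (rule poly_mapping_eqI) (simp add: lookup_sum lookup_single when_def in_keys_iff)

lemma PA_mult: "vars_lt n (g :: 'k::field mpoly) \<Longrightarrow>
   PA (Suc n) (g * Poly_Mapping.single (Poly_Mapping.single n k) c) = c \<odot> (PA n g \<otimes> qXp k)"
proof -
  assume g: "vars_lt n g"
  let ?m = "Poly_Mapping.single n k"
  have "g * Poly_Mapping.single ?m c = (\<Sum>mo\<in>Poly_Mapping.keys g. Poly_Mapping.single mo (Poly_Mapping.lookup g mo)) * Poly_Mapping.single ?m c"
    using poly_expand[of g] by (rule arg_cong[where f="\<lambda>x. x * Poly_Mapping.single ?m c"])
  also have "\<dots> = (\<Sum>mo\<in>Poly_Mapping.keys g. Poly_Mapping.single (mo + ?m) (Poly_Mapping.lookup g mo * c))"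
    by (simp add: sum_distrib_right mult_single)
  finally have e: "g * Poly_Mapping.single ?m c = \<dots>" .
  have M: "(Mo (Suc n) (mo + ?m) :: 'k qm) = Mo n mo \<otimes> qXp k" if "mo \<in> Poly_Mapping.keys g" for mo
  proof -
    have "Poly_Mapping.lookup mo n = 0" using g that by (simp add: vars_lt_def)
    moreover have "(Mo n (mo + ?m) :: 'k qm) = Mo n mo"
      by (rule Mo_cong) (simp add: lookup_add lookup_single_not_eq)
    ultimately show ?thesis by (simp add: Mo_Suc lookup_add)
  qed
  have "PA (Suc n) (g * Poly_Mapping.single ?m c)
      = qsum (Suc n) (Suc n) (\<lambda>mo. (Poly_Mapping.lookup g mo * c) \<odot> Mo (Suc n) (mo + ?m)) (Poly_Mapping.keys g)"
    by (simp add: e PA_sum PA_single)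
  also have "\<dots> = qsum (Suc n) (Suc n) (\<lambda>mo. c \<odot> ((Poly_Mapping.lookup g mo \<odot> Mo n mo) \<otimes> qXp k)) (Poly_Mapping.keys g)"
    by (rule qsum_cong) (simp add: M q_sm_sm q_tns_sm_l qtyp_tns mult.commute)
  also have "\<dots> = c \<odot> qsum (Suc n) (Suc n) (\<lambda>mo. (Poly_Mapping.lookup g mo \<odot> Mo n mo) \<otimes> qXp k) (Poly_Mapping.keys g)"
    by (rule qsum_sm[symmetric]) (simp add: qtyp_tns)
  also have "qsum (Suc n) (Suc n) (\<lambda>mo. (Poly_Mapping.lookup g mo \<odot> Mo n mo) \<otimes> qXp k) (Poly_Mapping.keys g) = PA n g \<otimes> qXp k"
    unfolding PA_def by (subst qsum_tns_r[where p=1 and q=1]) (simp_all add: One_nat_def)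
  finally show ?thesis .
qed

lemma polyact_QA: "abs_qm (polyact n (qpoly r n) :: 'k::field nbmor) = QA r n"
proof (induction n arbitrary: r)
  case 0
  then show ?case
    by (simp add: polyact_PA qpoly_0 PA_single[of 0 0 1, simplified] Mo_0 q_sm_one)
next
  case (Suc n)
  have "abs_qm (polyact (Suc n) (qpoly r (Suc n)) :: 'k nbmor)
      = qsum (Suc n) (Suc n) (\<lambda>a. PA (Suc n) (qpoly a n * Poly_Mapping.single (Poly_Mapping.single n (r - a)) (kap (r - a)))) {..r}"
    by (simp add: polyact_PA qpoly_Suc PA_sum)
  also have "\<dots> = QA r (Suc n)"
    by (simp add: PA_mult qpoly_vars Suc.IH[symmetric] polyact_PA)
  finally show ?case .
qed


lemma qsum_mono_Z: "finite T \<Longrightarrow> S \<subseteq> T \<Longrightarrow> (\<And>x. x \<in> T - S \<Longrightarrow> F x = qZ n m) \<Longrightarrow>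
   (\<And>x. x \<in> S \<Longrightarrow> qhom n m (F x)) \<Longrightarrow> qsum n m F T = qsum n m F S"
proof -
  assume a: "finite T" "S \<subseteq> T" "\<And>x. x \<in> T - S \<Longrightarrow> F x = qZ n m" "\<And>x. x \<in> S \<Longrightarrow> qhom n m (F x)"
  have eq: "T = S \<union> (T - S)" using a by auto
  have "qsum n m F T = qsum n m F S \<oplus> qsum n m F (T - S)"
    using a by (subst eq, intro qsum_union) (auto intro: finite_subset)
  also have "qsum n m F (T - S) = qZ n m" using a by (intro qsum_Z) auto
  finally show ?thesis by (simp add: q_add_zero)
qed

lemma QA_split: "(QA r (n + k) :: 'k::field qm) = qsum (n + k) (n + k) (\<lambda>a. QA a n \<otimes> QA (r - a) k) {..r}"
proof (induction k arbitrary: r)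
  case 0
  have "qsum n n (\<lambda>a. QA a n \<otimes> QA (r - a) 0) {..r} = (qsum n n (\<lambda>a. if a = r then QA a n else qZ n n) {..r} :: 'k qm)"
    by (rule qsum_cong) (auto simp: q_tns_unit_r q_tns_Z_r)
  also have "\<dots> = QA r n" by (rule qsum_delta) auto
  finally show ?case by simp
next
  case (Suc k)
  let ?N = "Suc (n + k)"
  define G where "G = (\<lambda>a c. QA a n \<otimes> (kap (r - c) \<odot> (QA (c - a) k \<otimes> qXp (r - c))) :: 'k qm)"
  have GT: "qhom ?N ?N (G a c)" for a c
    by (simp add: G_def qtyp_tns)
  have "(QA r (n + Suc k) :: 'k qm) = qsum ?N ?N (\<lambda>c. kap (r - c) \<odot> (QA c (n + k) \<otimes> qXp (r - c))) {..r}"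
    by simp
  also have "\<dots> = qsum ?N ?N (\<lambda>c. qsum ?N ?N (\<lambda>a. G a c) {..c}) {..r}"
  proof (rule qsum_cong)
    fix c
    have "kap (r - c) \<odot> (QA c (n + k) \<otimes> qXp (r - c) :: 'k qm)
        = kap (r - c) \<odot> (qsum (n + k) (n + k) (\<lambda>a. QA a n \<otimes> QA (c - a) k) {..c} \<otimes> qXp (r - c))"
      using Suc.IH[of c] by (rule arg_cong[where f="\<lambda>x. kap (r - c) \<odot> (x \<otimes> qXp (r - c))"])
    also have "\<dots> = kap (r - c) \<odot> qsum ?N ?N (\<lambda>a. (QA a n \<otimes> QA (c - a) k) \<otimes> qXp (r - c)) {..c}"
      by (subst qsum_tns_r[where p=1 and q=1]) (simp_all add: qtyp_tns One_nat_def)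
    also have "\<dots> = qsum ?N ?N (\<lambda>a. kap (r - c) \<odot> ((QA a n \<otimes> QA (c - a) k) \<otimes> qXp (r - c))) {..c}"
      by (rule qsum_sm) (simp add: qtyp_tns One_nat_def)
    also have "\<dots> = qsum ?N ?N (\<lambda>a. G a c) {..c}"
      by (rule qsum_cong) (simp add: G_def q_tns_assoc q_tns_sm_r qtyp_tns)
    finally show "kap (r - c) \<odot> (QA c (n + k) \<otimes> qXp (r - c)) = qsum ?N ?N (\<lambda>a. G a c) {..c}" .
  qed
  also have "\<dots> = qsum ?N ?N (\<lambda>c. qsum ?N ?N (\<lambda>a. if a \<le> c then G a c else qZ ?N ?N) {..r}) {..r}"
  proof (rule qsum_cong)
    fix c assume c: "c \<in> {..r}"
    have "qsum ?N ?N (\<lambda>a. if a \<le> c then G a c else qZ ?N ?N) {..r} = qsum ?N ?N (\<lambda>a. if a \<le> c then G a c else qZ ?N ?N) {..c}"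
      using c by (intro qsum_mono_Z) (auto simp: GT)
    also have "\<dots> = qsum ?N ?N (\<lambda>a. G a c) {..c}" by (rule qsum_cong) auto
    finally show "qsum ?N ?N (\<lambda>a. G a c) {..c} = qsum ?N ?N (\<lambda>a. if a \<le> c then G a c else qZ ?N ?N) {..r}" by simp
  qed
  also have "\<dots> = qsum ?N ?N (\<lambda>a. qsum ?N ?N (\<lambda>c. if a \<le> c then G a c else qZ ?N ?N) {..r}) {..r}"
    by (rule qsum_swap) (auto simp: GT)
  also have "\<dots> = qsum ?N ?N (\<lambda>a. QA a n \<otimes> QA (r - a) (Suc k)) {..r}"
  proof (rule qsum_cong)
    fix a assume a: "a \<in> {..r}"
    have "qsum ?N ?N (\<lambda>c. if a \<le> c then G a c else qZ ?N ?N) {..r} = qsum ?N ?N (\<lambda>c. if a \<le> c then G a c else qZ ?N ?N) {a..r}"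
      using a by (intro qsum_mono_Z) (auto simp: GT)
    also have "\<dots> = qsum ?N ?N (\<lambda>c. G a c) {a..r}" by (rule qsum_cong) auto
    also have "{a..r} = (\<lambda>b. a + b) ` {..r - a}"
    proof (rule set_eqI)
      fix x
      show "x \<in> {a..r} \<longleftrightarrow> x \<in> (\<lambda>b. a + b) ` {..r - a}"
      proof
        assume "x \<in> {a..r}"
        then show "x \<in> (\<lambda>b. a + b) ` {..r - a}" by (intro image_eqI[where x="x - a"]) auto
      qed (use a in auto)
    qed
    also have "qsum ?N ?N (\<lambda>c. G a c) \<dots> = qsum ?N ?N (\<lambda>b. G a (a + b)) {..r - a}"
      by (subst qsum_reindex) (auto simp: comp_def)
    also have "\<dots> = qsum ?N ?N (\<lambda>b. QA a n \<otimes> (kap (r - a - b) \<odot> (QA b k \<otimes> qXp (r - a - b)))) {..r - a}"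
      by (rule qsum_cong) (simp add: G_def diff_diff_add)
    also have "\<dots> = QA a n \<otimes> qsum (Suc k) (Suc k) (\<lambda>b. kap (r - a - b) \<odot> (QA b k \<otimes> qXp (r - a - b))) {..r - a}"
      by (subst qsum_tns_l[where p=n and q=n]) (simp_all add: qtyp_tns One_nat_def)
    also have "\<dots> = QA a n \<otimes> QA (r - a) (Suc k)" by simp
    finally show "qsum ?N ?N (\<lambda>c. if a \<le> c then G a c else qZ ?N ?N) {..r} = QA a n \<otimes> QA (r - a) (Suc k)" .
  qed
  finally show ?case by simp
qed


typedef (overloaded) 'k e2 = "{a :: 'k::field qm. qtyp a = Some (2, 2)}"
  morphisms rep2 abs2
  by (rule exI[of _ "qI 2"]) simp

setup_lifting type_definition_e2

instantiation e2 :: (field) "{ring, monoid_mult}"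
begin

lift_definition zero_e2 :: "'k::field e2" is "qZ 2 2" by simp
lift_definition one_e2 :: "'k::field e2" is "qI 2" by simp
lift_definition plus_e2 :: "'k::field e2 \<Rightarrow> 'k e2 \<Rightarrow> 'k e2" is "\<lambda>a b. a \<oplus> b" by (rule qtyp_add)
lift_definition times_e2 :: "'k::field e2 \<Rightarrow> 'k e2 \<Rightarrow> 'k e2" is "\<lambda>a b. a \<cdot> b" by (rule qtyp_cmp)
lift_definition uminus_e2 :: "'k::field e2 \<Rightarrow> 'k e2" is "\<lambda>a. (-1) \<odot> a" by simp
lift_definition minus_e2 :: "'k::field e2 \<Rightarrow> 'k e2 \<Rightarrow> 'k e2" is "\<lambda>a b. a \<oplus> ((-1) \<odot> b)" by (simp add: qtyp_add)

instance
proof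
  fix a b c :: "'k::field e2"
  show "a + b + c = a + (b + c)" by transfer (rule q_add_assoc)
  show "a + b = b + a" by transfer (rule q_add_comm)
  show "0 + a = a" by transfer (rule q_zero_add)
  show "- a + a = 0" by transfer (simp add: q_add_comm[of _ 2 2] q_add_neg)
  show "a - b = a + - b" by transfer simp
  show "a * b * c = a * (b * c)" by transfer (rule q_cmp_assoc)
  show "(a + b) * c = a * c + b * c" by transfer (rule q_cmp_add_l)
  show "a * (b + c) = a * b + a * c" by transfer (rule q_cmp_add_r)
  show "1 * a = a" by transfer (rule q_cmp_id_l)
  show "a * 1 = a" by transfer (rule q_cmp_id_r)
qed

end

lift_definition sc :: "'k::field \<Rightarrow> 'k e2 \<Rightarrow> 'k e2" is "\<lambda>c a. c \<odot> a" by simp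

lemma sc_mult_left: "sc c y * z = sc c (y * z)"
  by transfer (rule q_cmp_sm_l)
lemma sc_mult_right: "y * sc c z = sc c (y * z)"
  by transfer (rule q_cmp_sm_r)
lemma sc_add: "sc c (y + z) = sc c y + sc c z"
  by transfer (rule q_sm_add)
lemma sc_add_scalar: "sc (c + d) y = sc c y + sc d y"
  by transfer (rule q_sm_add_scalar)
lemma sc_sc: "sc c (sc d y) = sc (c * d) y"
  by transfer (rule q_sm_sm)
lemma sc_one [simp]: "sc 1 y = y"
  by transfer (rule q_sm_one)
lemma sc_zero [simp]: "sc 0 y = 0"
  by transfer (rule q_sm_zero)
lemma sc_zero_right [simp]: "sc c 0 = 0"
  by transfer (rule q_sm_Z)
lemma sc_minus_one: "sc (-1) y = - y"
  by transfer simp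
lemma sc_neg: "sc (- c) y = - sc c y"
proof -
  have "sc (- c) y = sc (-1) (sc c y)" by (simp add: sc_sc)
  then show ?thesis by (simp add: sc_minus_one)
qed
lemma sc_diff_scalar: "sc (c - d) y = sc c y - sc d y"
  using sc_add_scalar[of c "- d" y] by (simp add: sc_neg)
lemma sc_sum: "sc c (sum f S) = (\<Sum>x\<in>S. sc c (f x))"
  by (induction S rule: infinite_finite_induct) (simp_all add: sc_add)
lemma sum_sc: "sc (sum f S) y = (\<Sum>x\<in>S. sc (f x) y)"
  by (induction S rule: infinite_finite_induct) (simp_all add: sc_add_scalar)
lemma sc_two: "sc 2 y = y + y"
  using sc_add_scalar[of 1 1 y] by simp

lemma rep2_typ [simp]: "qtyp (rep2 a) = Some (2, 2)"
  using rep2 by simp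
lemma rep2_add: "rep2 (a + b) = rep2 a \<oplus> rep2 b"
  by (simp add: plus_e2.rep_eq)
lemma rep2_mult: "rep2 (a * b) = rep2 a \<cdot> rep2 b"
  by (simp add: times_e2.rep_eq)
lemma rep2_zero: "rep2 0 = qZ 2 2"
  by (simp add: zero_e2.rep_eq)
lemma rep2_one: "rep2 1 = qI 2"
  by (simp add: one_e2.rep_eq)
lemma rep2_sc: "rep2 (sc c a) = c \<odot> rep2 a"
  by (simp add: sc.rep_eq)
lemma rep2_sum: "rep2 (sum f S) = qsum 2 2 (\<lambda>x. rep2 (f x)) S"
  by (induction S rule: infinite_finite_induct) (simp_all add: qsum_infinite rep2_zero rep2_add qsum_insert)
lemma rep2_inject': "rep2 a = rep2 b \<Longrightarrow> a = b"
  using rep2_inject by blast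

lift_definition ex1 :: "'k::field e2" is "qX \<otimes> qI 1" by (simp add: qtyp_tns)
lift_definition ex2 :: "'k::field e2" is "qI 1 \<otimes> qX" by (simp add: qtyp_tns)
lift_definition eT :: "'k::field e2" is "qT" by simp
lift_definition ecc :: "'k::field e2" is "qU \<cdot> qC" by (simp add: qtyp_cmp)


lemma qtyp_cmp_eq: "qtyp (g \<cdot> f) = (case (qtyp f, qtyp g) of
        (Some (a, b), Some (b', c)) \<Rightarrow> (if b = b' then Some (a, c) else None) | _ \<Rightarrow> None)"
  by transfer simp
lemma qtyp_tns_eq: "qtyp (f \<otimes> g) = (case (qtyp f, qtyp g) of
        (Some (a, b), Some (a', b')) \<Rightarrow> Some (a + a', b + b') | _ \<Rightarrow> None)"
  by transfer simp
lemma qtyp_add_eq: "qtyp (f \<oplus> g) = (if qtyp f = qtyp g then qtyp f else None)"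
  by transfer simp

lemmas qT_simps = qtyp_cmp_eq qtyp_tns_eq qtyp_add_eq

lemma split_l: "qhom a b f \<Longrightarrow> qhom c d g \<Longrightarrow> f \<otimes> g = (qI b \<otimes> g) \<cdot> (f \<otimes> qI c)"
proof -
  assume f: "qhom a b f" and g: "qhom c d g"
  have "f \<otimes> g = (qI b \<cdot> f) \<otimes> (g \<cdot> qI c)" using f g by (simp add: q_cmp_id_l q_cmp_id_r)
  also have "\<dots> = (qI b \<otimes> g) \<cdot> (f \<otimes> qI c)" by (rule q_interchange) (simp_all add: f g)
  finally show ?thesis .
qed

lemma split_r: "qhom a b f \<Longrightarrow> qhom c d g \<Longrightarrow> f \<otimes> g = (f \<otimes> qI d) \<cdot> (qI a \<otimes> g)"
proof -
  assume f: "qhom a b f" and g: "qhom c d g"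
  have "f \<otimes> g = (f \<cdot> qI a) \<otimes> (qI d \<cdot> g)" using f g by (simp add: q_cmp_id_l q_cmp_id_r)
  also have "\<dots> = (f \<otimes> qI d) \<cdot> (qI a \<otimes> g)" using f g by (intro q_interchange) simp_all
  finally show ?thesis .
qed

lemma whisk_l: "qhom n m f \<Longrightarrow> qhom m p g \<Longrightarrow> qI a \<otimes> (g \<cdot> f) = (qI a \<otimes> g) \<cdot> (qI a \<otimes> f)"
proof -
  assume f: "qhom n m f" and g: "qhom m p g"
  have "qI a \<otimes> (g \<cdot> f) = (qI a \<cdot> qI a) \<otimes> (g \<cdot> f)" by (simp add: q_cmp_id_l)
  also have "\<dots> = (qI a \<otimes> g) \<cdot> (qI a \<otimes> f)" using f g by (intro q_interchange) simp_all
  finally show ?thesis .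
qed

lemma whisk_r: "qhom n m f \<Longrightarrow> qhom m p g \<Longrightarrow> (g \<cdot> f) \<otimes> qI a = (g \<otimes> qI a) \<cdot> (f \<otimes> qI a)"
proof -
  assume f: "qhom n m f" and g: "qhom m p g"
  have "(g \<cdot> f) \<otimes> qI a = (g \<cdot> f) \<otimes> (qI a \<cdot> qI a)" by (simp add: q_cmp_id_l)
  also have "\<dots> = (g \<otimes> qI a) \<cdot> (f \<otimes> qI a)" using f g by (intro q_interchange) simp_all
  finally show ?thesis .
qed

lemma assoc_l: "qhom n m f \<Longrightarrow> qhom n' m' g \<Longrightarrow> qhom n'' m'' h \<Longrightarrow> f \<otimes> (g \<otimes> h) = (f \<otimes> g) \<otimes> h"
  by (rule q_tns_assoc[symmetric])

lemma I2: "qI 1 \<otimes> qI 1 = qI 2"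
  by (simp add: q_tns_id)

lemma Ix: "qI a \<otimes> (qI b \<otimes> f) = qI (a + b) \<otimes> f" if "qhom n m f"
  using that by (simp add: q_tns_assoc[symmetric] q_tns_id)

lemma xI: "(f \<otimes> qI a) \<otimes> qI b = f \<otimes> qI (a + b)" if "qhom n m f"
  using that by (simp add: q_tns_assoc q_tns_id)

lemma rotX: "(qC \<otimes> qI 1) \<cdot> (qI 1 \<otimes> qX \<otimes> qI 1) \<cdot> (qI 1 \<otimes> qU) = (-1) \<odot> (qX :: 'k::field qm)"
proof -
  have "(qC \<otimes> qI 1) \<cdot> (qI 1 \<otimes> qX \<otimes> qI 1) = (qC \<otimes> qI 1) \<cdot> ((qI 1 \<otimes> qX) \<otimes> qI 1)"
    by (simp add: q_tns_assoc)
  also have "\<dots> = (qC \<cdot> (qI 1 \<otimes> qX)) \<otimes> (qI 1 \<cdot> qI 1)"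
    by (rule q_interchange[symmetric]) (simp_all add: qT_simps)
  also have "\<dots> = ((-1) \<odot> (qC \<cdot> (qX \<otimes> qI 1))) \<otimes> qI 1"
    by (simp add: q_cap_dot q_cmp_id_l)
  also have "\<dots> = (-1) \<odot> ((qC \<cdot> (qX \<otimes> qI 1)) \<otimes> (qI 1 \<cdot> qI 1))"
    by (simp add: q_tns_sm_l qT_simps q_cmp_id_l)
  also have "\<dots> = (-1) \<odot> ((qC \<otimes> qI 1) \<cdot> ((qX \<otimes> qI 1) \<otimes> qI 1))"
    by (subst q_interchange) (simp_all add: qT_simps)
  also have "(qX \<otimes> qI 1) \<otimes> qI 1 = (qX \<otimes> qI 2 :: 'k qm)"
    by (simp add: xI)
  finally have A: "(qC \<otimes> qI 1) \<cdot> (qI 1 \<otimes> qX \<otimes> qI 1) = (-1) \<odot> ((qC \<otimes> qI 1) \<cdot> (qX \<otimes> qI 2) :: 'k qm)" .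
  have B: "(qX \<otimes> qI 2) \<cdot> (qI 1 \<otimes> qU) = (qI 1 \<otimes> qU) \<cdot> (qX :: 'k qm)"
  proof -
    have "(qX \<otimes> qI 2) \<cdot> (qI 1 \<otimes> qU) = (qX \<cdot> qI 1) \<otimes> (qI 2 \<cdot> qU :: 'k qm)"
      by (rule q_interchange[symmetric]) simp_all
    also have "\<dots> = qX \<otimes> qU" by (simp add: q_cmp_id_l)
    also have "\<dots> = (qI 1 \<otimes> qU) \<cdot> (qX \<otimes> qI 0)" by (rule split_l) simp_all
    also have "\<dots> = (qI 1 \<otimes> qU) \<cdot> qX" by (simp add: q_tns_unit_r)
    finally show ?thesis .
  qed
  have "(qC \<otimes> qI 1) \<cdot> (qI 1 \<otimes> qX \<otimes> qI 1) \<cdot> (qI 1 \<otimes> qU)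
      = ((qC \<otimes> qI 1) \<cdot> (qI 1 \<otimes> qX \<otimes> qI 1)) \<cdot> (qI 1 \<otimes> qU :: 'k qm)"
    by (rule q_cmp_assoc[symmetric]) (simp_all add: qT_simps)
  also have "\<dots> = (-1) \<odot> (((qC \<otimes> qI 1) \<cdot> (qX \<otimes> qI 2)) \<cdot> (qI 1 \<otimes> qU))"
    by (simp add: A q_cmp_sm_l qT_simps)
  also have "((qC \<otimes> qI 1) \<cdot> (qX \<otimes> qI 2)) \<cdot> (qI 1 \<otimes> qU) = (qC \<otimes> qI 1) \<cdot> ((qX \<otimes> qI 2) \<cdot> (qI 1 \<otimes> qU :: 'k qm))"
    by (rule q_cmp_assoc) (simp_all add: qT_simps)
  also have "\<dots> = ((qC \<otimes> qI 1) \<cdot> (qI 1 \<otimes> qU)) \<cdot> qX"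
    by (simp add: B q_cmp_assoc qT_simps)
  also have "\<dots> = qX" by (simp add: q_zigzag1 q_cmp_id_l)
  finally show ?thesis .
qed

lemma D2: "(qX \<otimes> qI 1) \<cdot> qU = (-1) \<odot> ((qI 1 \<otimes> qX) \<cdot> (qU :: 'k::field qm))"
proof -
  let ?V = "(qX \<otimes> qI 1) \<cdot> (qU :: 'k qm)"
  let ?R = "(qC \<otimes> qI 1) \<cdot> (qI 1 \<otimes> qX \<otimes> qI 1) \<cdot> (qI 1 \<otimes> (qU :: 'k qm))"
  have VT: "qhom 0 2 ?V" by (simp add: qT_simps)
  have "(qI 1 \<otimes> qX) \<cdot> qU = (qI 1 \<otimes> ((-1) \<odot> ?R)) \<cdot> qU"
    by (simp add: rotX q_neg_neg)
  also have "\<dots> = (-1) \<odot> ((qI 1 \<otimes> ?R) \<cdot> qU)"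
    by (simp add: q_tns_sm_r q_cmp_sm_l qT_simps)
  also have "(qI 1 \<otimes> ?R) \<cdot> qU = ?V"
  proof -
    have "qI 1 \<otimes> ?R = (qI 1 \<otimes> (qC \<otimes> qI 1)) \<cdot> (qI 1 \<otimes> (qI 1 \<otimes> qX \<otimes> qI 1)) \<cdot> (qI 1 \<otimes> (qI 1 \<otimes> qU))"
      by (simp add: whisk_l qT_simps)
    also have "qI 1 \<otimes> (qI 1 \<otimes> qU) = qI 2 \<otimes> (qU :: 'k qm)"
      by (simp add: Ix)
    also have "qI 1 \<otimes> (qI 1 \<otimes> qX \<otimes> qI 1) = qI 2 \<otimes> (qX \<otimes> qI 1 :: 'k qm)"
      by (simp add: Ix qT_simps)
    also have "qI 1 \<otimes> (qC \<otimes> qI 1) = (qI 1 \<otimes> qC) \<otimes> (qI 1 :: 'k qm)"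
      by (simp add: q_tns_assoc)
    finally have R1: "qI 1 \<otimes> ?R = ((qI 1 \<otimes> qC) \<otimes> qI 1) \<cdot> (qI 2 \<otimes> (qX \<otimes> qI 1)) \<cdot> (qI 2 \<otimes> qU)" .
    have U2: "(qI 2 \<otimes> qU) \<cdot> qU = qU \<otimes> (qU :: 'k qm)"
      by (subst split_l[of qU 0 2 qU 0 2]) (simp_all add: q_tns_unit_r)
    have U3: "(qI 2 \<otimes> (qX \<otimes> qI 1)) \<cdot> (qU \<otimes> qU) = (qU \<otimes> qI 2) \<cdot> ?V"
    proof -
      have "(qI 2 \<otimes> (qX \<otimes> qI 1)) \<cdot> (qU \<otimes> qU) = (qI 2 \<cdot> qU) \<otimes> ?V"
        by (rule q_interchange[symmetric]) (simp_all add: qT_simps)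
      also have "\<dots> = qU \<otimes> ?V" by (simp add: q_cmp_id_l)
      also have "\<dots> = (qU \<otimes> qI 2) \<cdot> (qI 0 \<otimes> ?V)" by (rule split_r) (simp_all add: VT)
      finally show ?thesis using VT by (simp add: q_tns_unit_l)
    qed
    have U4: "((qI 1 \<otimes> qC) \<otimes> qI 1) \<cdot> (qU \<otimes> qI 2) = (qI 2 :: 'k qm)"
    proof -
      have "qU \<otimes> qI 2 = (qU \<otimes> qI 1) \<otimes> (qI 1 :: 'k qm)" by (simp add: xI)
      then have "((qI 1 \<otimes> qC) \<otimes> qI 1) \<cdot> (qU \<otimes> qI 2) = ((qI 1 \<otimes> qC) \<otimes> qI 1) \<cdot> ((qU \<otimes> qI 1) \<otimes> (qI 1 :: 'k qm))"
        by simp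
      also have "\<dots> = ((qI 1 \<otimes> qC) \<cdot> (qU \<otimes> qI 1)) \<otimes> (qI 1 \<cdot> qI 1)"
        by (rule q_interchange[symmetric]) (simp_all add: qT_simps)
      also have "\<dots> = qI 2" by (simp add: q_zigzag2 q_cmp_id_l I2)
      finally show ?thesis .
    qed
    have "(qI 1 \<otimes> ?R) \<cdot> qU = ((qI 1 \<otimes> qC) \<otimes> qI 1) \<cdot> ((qI 2 \<otimes> (qX \<otimes> qI 1)) \<cdot> ((qI 2 \<otimes> qU) \<cdot> qU))"
      by (simp add: R1 q_cmp_assoc qT_simps)
    also have "\<dots> = ((qI 1 \<otimes> qC) \<otimes> qI 1) \<cdot> ((qU \<otimes> qI 2) \<cdot> ?V)"
      by (simp add: U2 U3)
    also have "\<dots> = ?V"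
      by (simp add: q_cmp_assoc[symmetric] qT_simps U4 q_cmp_id_l del: q_cmp_assoc)
    finally show ?thesis .
  qed
  finally show ?thesis by (simp add: q_neg_neg VT)
qed

lemma chain: "a \<cdot> b = c \<Longrightarrow> qhom n m r \<Longrightarrow> qhom m p b \<Longrightarrow> qhom p q a \<Longrightarrow> a \<cdot> (b \<cdot> r) = c \<cdot> r"
proof -
  assume h: "a \<cdot> b = c" "qhom n m r" "qhom m p b" "qhom p q a"
  have "a \<cdot> (b \<cdot> r) = (a \<cdot> b) \<cdot> r" using h by (intro q_cmp_assoc[symmetric]) auto
  then show ?thesis using h by simp
qed

lemma chain2: "a \<cdot> b = c1 \<cdot> c2 \<Longrightarrow> qhom n m r \<Longrightarrow> qhom m p b \<Longrightarrow> qhom p q a \<Longrightarrow>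
   qhom m p' c2 \<Longrightarrow> qhom p' q c1 \<Longrightarrow> a \<cdot> (b \<cdot> r) = c1 \<cdot> (c2 \<cdot> r)"
proof -
  assume h: "a \<cdot> b = c1 \<cdot> c2" "qhom n m r" "qhom m p b" "qhom p q a" "qhom m p' c2" "qhom p' q c1"
  have "a \<cdot> (b \<cdot> r) = (a \<cdot> b) \<cdot> r" using h by (intro q_cmp_assoc[symmetric]) auto
  also have "\<dots> = (c1 \<cdot> c2) \<cdot> r" using h by simp
  also have "\<dots> = c1 \<cdot> (c2 \<cdot> r)" using h by (intro q_cmp_assoc) auto
  finally show ?thesis .
qed

lemma CT: "(qC \<otimes> qI 2) \<cdot> (qI 1 \<otimes> qT \<otimes> qI 1) = ((qC \<otimes> qI 1) \<cdot> (qI 1 \<otimes> qT)) \<otimes> (qI 1 :: 'k::field qm)"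
proof -
  have "(qC \<otimes> qI 2) \<cdot> (qI 1 \<otimes> qT \<otimes> qI 1) = ((qC \<otimes> qI 1) \<otimes> qI 1) \<cdot> ((qI 1 \<otimes> qT) \<otimes> (qI 1 :: 'k qm))"
    by (simp add: q_tns_id q_tns_assoc)
  also have "\<dots> = ((qC \<otimes> qI 1) \<cdot> (qI 1 \<otimes> qT)) \<otimes> (qI 1 \<cdot> qI 1)"
    by (rule q_interchange[symmetric]) (simp_all add: qT_simps)
  finally show ?thesis by (simp add: q_cmp_id_l)
qed

lemma CU: "(qI 1 \<otimes> qC \<otimes> qI 1) \<cdot> (qI 2 \<otimes> qU) = (qI 2 :: 'k::field qm)"
proof -
  have "(qI 1 \<otimes> qC \<otimes> qI 1) \<cdot> (qI 2 \<otimes> qU) = (qI 1 \<otimes> qC \<otimes> qI 1) \<cdot> (qI 1 \<otimes> (qI 1 \<otimes> (qU :: 'k qm)))"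
    by (simp add: Ix)
  also have "\<dots> = qI 1 \<otimes> ((qC \<otimes> qI 1) \<cdot> (qI 1 \<otimes> qU))"
    by (rule whisk_l[symmetric]) (simp_all add: qT_simps)
  finally show ?thesis by (simp add: q_zigzag1 I2)
qed

lemma CU2: "(qC \<otimes> qI 2) \<cdot> (qI 1 \<otimes> qU \<otimes> qI 1) = (qI 2 :: 'k::field qm)"
proof -
  have "(qC \<otimes> qI 2) \<cdot> (qI 1 \<otimes> qU \<otimes> qI 1) = ((qC \<otimes> qI 1) \<otimes> qI 1) \<cdot> ((qI 1 \<otimes> qU) \<otimes> (qI 1 :: 'k qm))"
    by (simp add: q_tns_id q_tns_assoc)
  also have "\<dots> = ((qC \<otimes> qI 1) \<cdot> (qI 1 \<otimes> qU)) \<otimes> (qI 1 \<cdot> qI 1)"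
    by (rule q_interchange[symmetric]) (simp_all add: qT_simps)
  finally show ?thesis by (simp add: q_cmp_id_l q_zigzag1 I2)
qed

lemma PhiT_q: "(qC \<otimes> qI 2) \<cdot> (qI 1 \<otimes> qT \<otimes> qI 1) \<cdot> (qI 2 \<otimes> qU) = (qT :: 'k::field qm)"
proof -
  have S2: "(qC \<otimes> qI 2) \<cdot> (qI 1 \<otimes> qT \<otimes> qI 1) = (qI 1 \<otimes> qC \<otimes> qI 1) \<cdot> (qT \<otimes> (qI 2 :: 'k qm))"
  proof -
    have "(qC \<otimes> qI 2) \<cdot> (qI 1 \<otimes> qT \<otimes> qI 1) = ((qI 1 \<otimes> qC) \<cdot> (qT \<otimes> qI 1)) \<otimes> (qI 1 :: 'k qm)"
      by (simp add: CT q_pitchfork)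
    also have "\<dots> = ((qI 1 \<otimes> qC) \<otimes> qI 1) \<cdot> ((qT \<otimes> qI 1) \<otimes> qI 1)"
      by (subst whisk_r) (simp_all add: qT_simps)
    finally show ?thesis by (simp add: q_tns_assoc q_tns_id)
  qed
  have S3: "(qT \<otimes> qI 2) \<cdot> (qI 2 \<otimes> qU) = (qI 2 \<otimes> qU) \<cdot> (qT :: 'k qm)"
  proof -
    have "(qT \<otimes> qI 2) \<cdot> (qI 2 \<otimes> qU) = (qT \<cdot> qI 2) \<otimes> (qI 2 \<cdot> (qU :: 'k qm))"
      by (rule q_interchange[symmetric]) simp_all
    also have "\<dots> = qT \<otimes> qU" by (simp add: q_cmp_id_l q_cmp_id_r)
    also have "\<dots> = (qI 2 \<otimes> qU) \<cdot> (qT \<otimes> qI 0)" by (rule split_l) simp_all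
    finally show ?thesis by (simp add: q_tns_unit_r)
  qed
  have "(qC \<otimes> qI 2) \<cdot> (qI 1 \<otimes> qT \<otimes> qI 1) \<cdot> (qI 2 \<otimes> qU) = (qI 1 \<otimes> qC \<otimes> qI 1) \<cdot> (qT \<otimes> qI 2) \<cdot> (qI 2 \<otimes> (qU :: 'k qm))"
    by (rule chain2[OF S2]) (simp_all add: qT_simps)
  also have "\<dots> = (qI 1 \<otimes> qC \<otimes> qI 1) \<cdot> (qI 2 \<otimes> qU) \<cdot> qT"
    by (simp add: S3)
  also have "\<dots> = qI 2 \<cdot> qT"
    by (rule chain[OF CU]) (simp_all add: qT_simps)
  finally show ?thesis by (simp add: q_cmp_id_l)
qed

definition Phi :: "'k::field e2 \<Rightarrow> 'k e2" where
  "Phi a = abs2 ((qC \<otimes> qI 2) \<cdot> (qI 1 \<otimes> rep2 a \<otimes> qI 1) \<cdot> (qI 2 \<otimes> qU))"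

lemma rep2_Phi: "rep2 (Phi a) = (qC \<otimes> qI 2) \<cdot> (qI 1 \<otimes> rep2 a \<otimes> qI 1) \<cdot> (qI 2 \<otimes> qU)"
  unfolding Phi_def by (rule abs2_inverse) (simp add: qT_simps)

lemma Phi_add: "Phi (a + b) = Phi a + Phi b"
proof (rule rep2_inject')
  have "qI 1 \<otimes> (rep2 a \<oplus> rep2 b) \<otimes> qI 1 = (qI 1 \<otimes> rep2 a \<otimes> qI 1) \<oplus> (qI 1 \<otimes> rep2 b \<otimes> qI 1)"
    by (simp add: q_tns_add_l[where n=2 and m=2 and p=1 and q=1] q_tns_add_r[where n=3 and m=3 and p=1 and q=1] qT_simps)
  then show "rep2 (Phi (a + b)) = rep2 (Phi a + Phi b)"
    unfolding rep2_Phi rep2_add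
    by (simp only:, subst q_cmp_add_l[where n=4 and m=4 and p=2], simp_all add: qT_simps,
        subst q_cmp_add_r[where n=2 and m=4 and p=2], simp_all add: qT_simps)
qed

lemma Phi_sc: "Phi (sc c a) = sc c (Phi a)"
proof (rule rep2_inject')
  have "qI 1 \<otimes> (c \<odot> rep2 a) \<otimes> qI 1 = c \<odot> (qI 1 \<otimes> rep2 a \<otimes> qI 1)"
    by (simp add: q_tns_sm_l[where n=2 and m=2 and p=1 and q=1] q_tns_sm_r[where n=3 and m=3 and p=1 and q=1] qT_simps)
  then show "rep2 (Phi (sc c a)) = rep2 (sc c (Phi a))"
    unfolding rep2_Phi rep2_sc
    by (simp only:, subst q_cmp_sm_l[where n=4 and m=4 and p=2], simp_all add: qT_simps,
        subst q_cmp_sm_r[where n=2 and m=4 and p=2], simp_all add: qT_simps)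
qed

lemma Phi_neg: "Phi (- a) = - Phi a"
  using Phi_sc[of "-1" a] by (simp add: sc_minus_one)

lemma Phi_diff: "Phi (a - b) = Phi a - Phi b"
  using Phi_add[of a "- b"] by (simp add: Phi_neg)

lemma rep_ex1: "rep2 ex1 = qX \<otimes> qI 1" by (simp add: ex1.rep_eq)
lemma rep_ex2: "rep2 ex2 = qI 1 \<otimes> qX" by (simp add: ex2.rep_eq)
lemma rep_eT: "rep2 eT = qT" by (simp add: eT.rep_eq)
lemma rep_ecc: "rep2 ecc = qU \<cdot> qC" by (simp add: ecc.rep_eq)

lemma Phi_T: "Phi eT = eT"
  by (rule rep2_inject') (simp add: rep2_Phi rep_eT PhiT_q)

lemma Phi_one: "Phi 1 = (ecc :: 'k::field e2)"
proof (rule rep2_inject')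
  have "(qC \<otimes> qI 2) \<cdot> (qI 1 \<otimes> qI 2 \<otimes> qI 1) \<cdot> (qI 2 \<otimes> qU) = (qC \<otimes> qI 2) \<cdot> (qI 2 \<otimes> (qU :: 'k qm))"
    by (simp add: q_tns_id q_cmp_id_l qT_simps)
  also have "\<dots> = (qC \<cdot> qI 2) \<otimes> (qI 2 \<cdot> qU)"
    by (rule q_interchange[symmetric]) simp_all
  also have "\<dots> = qC \<otimes> qU" by (simp add: q_cmp_id_l q_cmp_id_r)
  also have "\<dots> = (qI 0 \<otimes> qU) \<cdot> (qC \<otimes> qI 0)" by (rule split_l) simp_all
  also have "\<dots> = qU \<cdot> qC" by (simp add: q_tns_unit_l q_tns_unit_r)
  finally show "rep2 (Phi 1) = rep2 (ecc :: 'k e2)" by (simp add: rep2_Phi rep2_one rep_ecc)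
qed

lemma Phi_cc: "Phi ecc = (1 :: 'k::field e2)"
proof (rule rep2_inject')
  have "qI 1 \<otimes> (qU \<cdot> qC) \<otimes> qI 1 = (qI 1 \<otimes> qU \<otimes> qI 1) \<cdot> (qI 1 \<otimes> qC \<otimes> (qI 1 :: 'k qm))"
    by (simp add: whisk_l whisk_r qT_simps)
  then have "(qC \<otimes> qI 2) \<cdot> (qI 1 \<otimes> (qU \<cdot> qC) \<otimes> qI 1) \<cdot> (qI 2 \<otimes> qU)
     = ((qC \<otimes> qI 2) \<cdot> (qI 1 \<otimes> qU \<otimes> qI 1)) \<cdot> ((qI 1 \<otimes> qC \<otimes> qI 1) \<cdot> (qI 2 \<otimes> (qU :: 'k qm)))"
    by (simp add: q_cmp_assoc qT_simps)
  also have "\<dots> = qI 2" by (simp add: CU CU2 q_cmp_id_l)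
  finally show "rep2 (Phi ecc) = rep2 (1 :: 'k e2)" by (simp add: rep2_Phi rep2_one rep_ecc)
qed

lemma PhiX1T_q: "(qC \<otimes> qI 2) \<cdot> (qI 1 \<otimes> ((qX \<otimes> qI 1) \<cdot> qT) \<otimes> qI 1) \<cdot> (qI 2 \<otimes> qU)
   = (-1) \<odot> (qT \<cdot> (qX \<otimes> qI 1) :: 'k::field qm)"
proof -
  let ?W = "(qT \<otimes> qI 1) \<cdot> (qI 1 \<otimes> (qU :: 'k qm))"
  have WT: "qhom 1 3 ?W" by (simp add: qT_simps)
  have P1: "qI 1 \<otimes> ((qX \<otimes> qI 1) \<cdot> qT) \<otimes> qI 1 = ((qI 1 \<otimes> qX) \<otimes> qI 2) \<cdot> (qI 1 \<otimes> qT \<otimes> (qI 1 :: 'k qm))"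
  proof -
    have "qI 1 \<otimes> ((qX \<otimes> qI 1) \<cdot> qT) \<otimes> qI 1 = qI 1 \<otimes> (((qX \<otimes> qI 1) \<otimes> qI 1) \<cdot> (qT \<otimes> (qI 1 :: 'k qm)))"
      by (subst whisk_r) (simp_all add: qT_simps)
    also have "\<dots> = (qI 1 \<otimes> ((qX \<otimes> qI 1) \<otimes> qI 1)) \<cdot> (qI 1 \<otimes> qT \<otimes> qI 1)"
      by (subst whisk_l) (simp_all add: qT_simps)
    also have "qI 1 \<otimes> ((qX \<otimes> qI 1) \<otimes> qI 1) = (qI 1 \<otimes> qX) \<otimes> (qI 2 :: 'k qm)"
      by (simp add: q_tns_assoc q_tns_id)
    finally show ?thesis .
  qed
  have P2: "(qC \<otimes> qI 2) \<cdot> ((qI 1 \<otimes> qX) \<otimes> qI 2) = (-1) \<odot> ((qC \<otimes> qI 2) \<cdot> (qX \<otimes> qI 3 :: 'k qm))"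
  proof -
    have "(qC \<otimes> qI 2) \<cdot> ((qI 1 \<otimes> qX) \<otimes> qI 2) = (qC \<cdot> (qI 1 \<otimes> qX)) \<otimes> (qI 2 \<cdot> (qI 2 :: 'k qm))"
      by (rule q_interchange[symmetric]) (simp_all add: qT_simps)
    also have "\<dots> = ((-1) \<odot> (qC \<cdot> (qX \<otimes> qI 1))) \<otimes> (qI 2 \<cdot> qI 2)"
      by (simp only: q_cap_dot)
    also have "\<dots> = (-1) \<odot> ((qC \<cdot> (qX \<otimes> qI 1)) \<otimes> (qI 2 \<cdot> qI 2))"
      by (rule q_tns_sm_l) (simp_all add: qT_simps)
    also have "(qC \<cdot> (qX \<otimes> qI 1)) \<otimes> (qI 2 \<cdot> qI 2) = (qC \<otimes> qI 2) \<cdot> ((qX \<otimes> qI 1) \<otimes> (qI 2 :: 'k qm))"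
      by (rule q_interchange) (simp_all add: qT_simps)
    also have "(qX \<otimes> qI 1) \<otimes> qI 2 = (qX \<otimes> qI 3 :: 'k qm)"
      by (simp add: q_tns_assoc q_tns_id)
    finally show ?thesis .
  qed
  have P3: "(qI 1 \<otimes> qT \<otimes> qI 1) \<cdot> (qI 2 \<otimes> qU) = qI 1 \<otimes> ?W"
  proof -
    have "(qI 1 \<otimes> qT \<otimes> qI 1) \<cdot> (qI 2 \<otimes> qU) = (qI 1 \<otimes> qT \<otimes> qI 1) \<cdot> (qI 1 \<otimes> (qI 1 \<otimes> (qU :: 'k qm)))"
      by (simp add: Ix)
    also have "\<dots> = qI 1 \<otimes> ?W"
      by (rule whisk_l[symmetric]) (simp_all add: qT_simps)
    finally show ?thesis .
  qed
  have P4: "(qX \<otimes> qI 3) \<cdot> (qI 1 \<otimes> ?W) = (qI 1 \<otimes> ?W) \<cdot> (qX \<otimes> qI 1)"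
  proof -
    have "(qX \<otimes> qI 3) \<cdot> (qI 1 \<otimes> ?W) = (qX \<cdot> qI 1) \<otimes> (qI 3 \<cdot> ?W)"
      by (rule q_interchange[symmetric]) (simp_all add: qT_simps)
    also have "\<dots> = qX \<otimes> ?W" using WT by (simp add: q_cmp_id_l)
    also have "\<dots> = (qI 1 \<otimes> ?W) \<cdot> (qX \<otimes> qI 1)" by (rule split_l) (simp_all add: WT)
    finally show ?thesis .
  qed
  have P5: "(qC \<otimes> qI 2) \<cdot> (qI 1 \<otimes> ?W) = qT"
  proof -
    have "(qC \<otimes> qI 2) \<cdot> (qI 1 \<otimes> ?W) = (qC \<otimes> qI 2) \<cdot> ((qI 1 \<otimes> qT \<otimes> qI 1) \<cdot> (qI 2 \<otimes> qU))"
      by (simp only: P3)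
    also have "\<dots> = qT" by (rule PhiT_q)
    finally show ?thesis .
  qed
  have "(qC \<otimes> qI 2) \<cdot> (qI 1 \<otimes> ((qX \<otimes> qI 1) \<cdot> qT) \<otimes> qI 1) \<cdot> (qI 2 \<otimes> qU)
      = (qC \<otimes> qI 2) \<cdot> ((qI 1 \<otimes> qX) \<otimes> qI 2) \<cdot> (qI 1 \<otimes> qT \<otimes> qI 1) \<cdot> (qI 2 \<otimes> (qU :: 'k qm))"
    by (simp add: P1 q_cmp_assoc qT_simps)
  also have "\<dots> = (qC \<otimes> qI 2) \<cdot> ((qI 1 \<otimes> qX) \<otimes> qI 2) \<cdot> (qI 1 \<otimes> ?W)"
    by (simp only: P3)
  also have "\<dots> = ((-1) \<odot> ((qC \<otimes> qI 2) \<cdot> (qX \<otimes> qI 3))) \<cdot> (qI 1 \<otimes> ?W)"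
    by (rule chain[OF P2]) (simp_all add: qT_simps)
  also have "\<dots> = (-1) \<odot> ((qC \<otimes> qI 2) \<cdot> ((qX \<otimes> qI 3) \<cdot> (qI 1 \<otimes> ?W)))"
    by (simp add: q_cmp_sm_l q_cmp_assoc qT_simps)
  also have "\<dots> = (-1) \<odot> (((qC \<otimes> qI 2) \<cdot> (qI 1 \<otimes> ?W)) \<cdot> (qX \<otimes> qI 1))"
    by (simp add: P4 q_cmp_assoc qT_simps)
  also have "\<dots> = (-1) \<odot> (qT \<cdot> (qX \<otimes> qI 1))"
    by (simp only: P5)
  finally show ?thesis .
qed

lemma PhiTX2_q: "(qC \<otimes> qI 2) \<cdot> (qI 1 \<otimes> (qT \<cdot> (qI 1 \<otimes> qX)) \<otimes> qI 1) \<cdot> (qI 2 \<otimes> qU)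
   = (-1) \<odot> ((qI 1 \<otimes> qX) \<cdot> (qT :: 'k::field qm))"
proof -
  let ?V = "(qC \<otimes> qI 1) \<cdot> (qI 1 \<otimes> (qT :: 'k qm))"
  have VT: "qhom 3 1 ?V" by (simp add: qT_simps)
  have Q1: "qI 1 \<otimes> (qT \<cdot> (qI 1 \<otimes> qX)) \<otimes> qI 1 = (qI 1 \<otimes> qT \<otimes> qI 1) \<cdot> (qI 2 \<otimes> (qX \<otimes> (qI 1 :: 'k qm)))"
  proof -
    have "qI 1 \<otimes> (qT \<cdot> (qI 1 \<otimes> qX)) \<otimes> qI 1 = qI 1 \<otimes> ((qT \<otimes> qI 1) \<cdot> ((qI 1 \<otimes> qX) \<otimes> (qI 1 :: 'k qm)))"
      by (subst whisk_r) (simp_all add: qT_simps)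
    also have "\<dots> = (qI 1 \<otimes> qT \<otimes> qI 1) \<cdot> (qI 1 \<otimes> ((qI 1 \<otimes> qX) \<otimes> qI 1))"
      by (subst whisk_l) (simp_all add: qT_simps)
    also have "qI 1 \<otimes> ((qI 1 \<otimes> qX) \<otimes> qI 1) = qI 2 \<otimes> (qX \<otimes> (qI 1 :: 'k qm))"
      by (simp add: q_tns_assoc Ix qT_simps)
    finally show ?thesis .
  qed
  have Q2: "(qI 2 \<otimes> (qX \<otimes> qI 1)) \<cdot> (qI 2 \<otimes> qU) = (-1) \<odot> ((qI 3 \<otimes> qX) \<cdot> (qI 2 \<otimes> (qU :: 'k qm)))"
  proof -
    have "(qI 2 \<otimes> (qX \<otimes> qI 1)) \<cdot> (qI 2 \<otimes> qU) = qI 2 \<otimes> ((qX \<otimes> qI 1) \<cdot> (qU :: 'k qm))"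
      by (rule whisk_l[symmetric]) (simp_all add: qT_simps)
    also have "\<dots> = qI 2 \<otimes> ((-1) \<odot> ((qI 1 \<otimes> qX) \<cdot> qU))" by (simp only: D2)
    also have "\<dots> = (-1) \<odot> (qI 2 \<otimes> ((qI 1 \<otimes> qX) \<cdot> qU))"
      by (rule q_tns_sm_r) (simp_all add: qT_simps)
    also have "qI 2 \<otimes> ((qI 1 \<otimes> qX) \<cdot> qU) = (qI 2 \<otimes> (qI 1 \<otimes> qX)) \<cdot> (qI 2 \<otimes> (qU :: 'k qm))"
      by (rule whisk_l) (simp_all add: qT_simps)
    also have "qI 2 \<otimes> (qI 1 \<otimes> qX) = qI 3 \<otimes> (qX :: 'k qm)"
      by (simp add: Ix)
    finally show ?thesis .
  qed
  have Q4: "(?V \<otimes> qI 1) \<cdot> (qI 3 \<otimes> qX) = (qI 1 \<otimes> qX) \<cdot> (?V \<otimes> qI 1)"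
  proof -
    have "(?V \<otimes> qI 1) \<cdot> (qI 3 \<otimes> qX) = (?V \<cdot> qI 3) \<otimes> (qI 1 \<cdot> qX)"
      by (rule q_interchange[symmetric]) (simp_all add: qT_simps)
    also have "\<dots> = ?V \<otimes> qX" using VT by (simp add: q_cmp_id_l q_cmp_id_r)
    also have "\<dots> = (qI 1 \<otimes> qX) \<cdot> (?V \<otimes> qI 1)" by (rule split_l) (simp_all add: VT)
    finally show ?thesis .
  qed
  have Q5: "(?V \<otimes> qI 1) \<cdot> (qI 2 \<otimes> qU) = qT"
  proof -
    have "(?V \<otimes> qI 1) \<cdot> (qI 2 \<otimes> qU) = ((qC \<otimes> qI 2) \<cdot> (qI 1 \<otimes> qT \<otimes> qI 1)) \<cdot> (qI 2 \<otimes> qU)"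
      by (simp only: CT)
    also have "\<dots> = (qC \<otimes> qI 2) \<cdot> (qI 1 \<otimes> qT \<otimes> qI 1) \<cdot> (qI 2 \<otimes> qU)"
      by (rule q_cmp_assoc) (simp_all add: qT_simps)
    also have "\<dots> = qT" by (rule PhiT_q)
    finally show ?thesis .
  qed
  have "(qC \<otimes> qI 2) \<cdot> (qI 1 \<otimes> (qT \<cdot> (qI 1 \<otimes> qX)) \<otimes> qI 1) \<cdot> (qI 2 \<otimes> qU)
     = ((qC \<otimes> qI 2) \<cdot> (qI 1 \<otimes> qT \<otimes> qI 1)) \<cdot> ((qI 2 \<otimes> (qX \<otimes> qI 1)) \<cdot> (qI 2 \<otimes> (qU :: 'k qm)))"
    by (subst Q1) (simp add: q_cmp_assoc qT_simps)
  also have "\<dots> = (?V \<otimes> qI 1) \<cdot> ((-1) \<odot> ((qI 3 \<otimes> qX) \<cdot> (qI 2 \<otimes> qU)))"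
    by (simp only: Q2 CT)
  also have "\<dots> = (-1) \<odot> (((?V \<otimes> qI 1) \<cdot> (qI 3 \<otimes> qX)) \<cdot> (qI 2 \<otimes> qU))"
    by (simp add: q_cmp_sm_r q_cmp_assoc qT_simps)
  also have "\<dots> = (-1) \<odot> ((qI 1 \<otimes> qX) \<cdot> ((?V \<otimes> qI 1) \<cdot> (qI 2 \<otimes> qU)))"
    by (simp add: Q4 q_cmp_assoc qT_simps)
  also have "\<dots> = (-1) \<odot> ((qI 1 \<otimes> qX) \<cdot> qT)"
    by (simp only: Q5)
  finally show ?thesis .
qed


lemma rep2_neg: "rep2 (- a) = (-1) \<odot> rep2 a"
  by (simp add: uminus_e2.rep_eq)
lemma rep2_diff: "rep2 (a - b) = rep2 a \<oplus> ((-1) \<odot> rep2 b)"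
  by (simp add: minus_e2.rep_eq)

lemma e_R: "ex1 * eT - eT * ex2 = 1 - (ecc :: 'k::field e2)"
  by (rule rep2_inject') (simp add: rep2_diff rep2_mult rep_ex1 rep_ex2 rep_eT rep_ecc rep2_one q_dot_slide[unfolded I2])

lemma Phi_x1T: "Phi (ex1 * eT) = - (eT * (ex1 :: 'k::field e2))"
  by (rule rep2_inject') (simp add: rep2_Phi rep2_neg rep2_mult rep_ex1 rep_eT PhiX1T_q)

lemma Phi_Tx2: "Phi (eT * ex2) = - (ex2 * (eT :: 'k::field e2))"
  by (rule rep2_inject') (simp add: rep2_Phi rep2_neg rep2_mult rep_ex2 rep_eT PhiTX2_q)

lemma e_D1: "eT * ex1 - ex2 * eT = 1 - (ecc :: 'k::field e2)"
proof -
  have "Phi (ex1 * eT - eT * ex2) = Phi (1 - (ecc :: 'k e2))" by (simp only: e_R)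
  then have "- (eT * ex1) + ex2 * eT = ecc - (1 :: 'k e2)"
    by (simp add: Phi_diff Phi_x1T Phi_Tx2 Phi_one Phi_cc)
  then show ?thesis by (simp add: algebra_simps)
qed

lemma e_comm: "ex1 * ex2 = ex2 * (ex1 :: 'k::field e2)"
proof (rule rep2_inject')
  have "(qX \<otimes> qI 1) \<cdot> (qI 1 \<otimes> qX) = qX \<otimes> (qX :: 'k qm)"
    by (subst split_r[of qX 1 1 qX 1 1]) simp_all
  moreover have "(qI 1 \<otimes> qX) \<cdot> (qX \<otimes> qI 1) = qX \<otimes> (qX :: 'k qm)"
    by (subst split_l[of qX 1 1 qX 1 1]) simp_all
  ultimately show "rep2 (ex1 * ex2) = rep2 (ex2 * (ex1 :: 'k e2))"
    by (simp add: rep2_mult rep_ex1 rep_ex2)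
qed

definition e1 :: "'k::field e2" where "e1 = ex1 + ex2"
definition e2 :: "'k::field e2" where "e2 = ex1 * ex2"

lemma e_T_e1: "eT * e1 = e1 * (eT :: 'k::field e2)"
proof -
  have a: "eT * ex1 = ex2 * eT + (1 - (ecc :: 'k e2))" using e_D1 by (simp add: algebra_simps)
  have b: "ex1 * eT = eT * ex2 + (1 - (ecc :: 'k e2))" using e_R by (simp add: algebra_simps)
  show ?thesis by (simp add: e1_def algebra_simps a b)
qed

lemma e_T_e2: "eT * e2 = e2 * eT + ex2 * ecc - ecc * (ex2 :: 'k::field e2)"
proof -
  have a: "eT * ex1 = ex2 * eT + (1 - (ecc :: 'k e2))" using e_D1 by (simp add: algebra_simps)
  have b: "eT * ex2 = ex1 * eT - (1 - (ecc :: 'k e2))" by (simp add: e_R[symmetric])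
  have "eT * e2 = (eT * ex1) * (ex2 :: 'k e2)" by (simp add: e2_def mult.assoc)
  also have "\<dots> = ex2 * (eT * ex2) + (1 - ecc) * ex2" by (simp only: a) (simp add: algebra_simps)
  also have "\<dots> = ex2 * ex1 * eT - ex2 * (1 - ecc) + (1 - ecc) * ex2" by (simp only: b) (simp add: algebra_simps)
  also have "\<dots> = e2 * eT + ex2 * ecc - ecc * ex2" by (simp add: e2_def e_comm algebra_simps)
  finally show ?thesis .
qed

definition capz :: "'k::field e2 \<Rightarrow> bool" where "capz B \<longleftrightarrow> qC \<cdot> rep2 B = qZ 2 0"
definition cupz :: "'k::field e2 \<Rightarrow> bool" where "cupz B \<longleftrightarrow> rep2 B \<cdot> qU = qZ 0 2"

lemma cap_mult: "qC \<cdot> rep2 (a * b) = (qC \<cdot> rep2 a) \<cdot> rep2 b"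
  by (simp add: rep2_mult q_cmp_assoc qT_simps)

lemma capz_mult_right: "capz B \<Longrightarrow> capz (B * y)"
  by (simp add: capz_def cap_mult q_cmp_Z_l)

lemma cap_x2: "qC \<cdot> rep2 (ex2 * y) = (-1) \<odot> (qC \<cdot> rep2 (ex1 * y))"
  by (simp add: cap_mult rep_ex1 rep_ex2 q_cap_dot q_cmp_sm_l qT_simps)

lemma capz_e1: "capz (e1 * y)"
proof -
  have "qC \<cdot> rep2 (e1 * y) = (qC \<cdot> rep2 (ex1 * y)) \<oplus> (qC \<cdot> rep2 (ex2 * y))"
    by (simp add: e1_def distrib_right rep2_add q_cmp_add_r[where n=2 and m=2 and p=0])
  also have "\<dots> = qZ 2 0" by (simp add: cap_x2 q_add_neg qT_simps)
  finally show ?thesis by (simp add: capz_def)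
qed

lemma capz_add: "capz a \<Longrightarrow> capz b \<Longrightarrow> capz (a + b)"
  by (simp add: capz_def rep2_add q_cmp_add_r[where n=2 and m=2 and p=0] q_add_zero)

lemma capz_neg: "capz a \<Longrightarrow> capz (- a)"
  by (simp add: capz_def rep2_neg q_cmp_sm_r[where n=2 and m=2 and p=0] q_sm_Z)

lemma capz_diff: "capz a \<Longrightarrow> capz b \<Longrightarrow> capz (a - b)"
  using capz_add[of a "- b"] capz_neg[of b] by simp

lemma capz_sc: "capz a \<Longrightarrow> capz (sc c a)"
  by (simp add: capz_def rep2_sc q_cmp_sm_r[where n=2 and m=2 and p=0] q_sm_Z)

lemma capz_e2: "capz B \<Longrightarrow> ex1 * B = B * ex1 \<Longrightarrow> capz (e2 * B)"
proof -
  assume B: "capz B" "ex1 * B = B * ex1"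
  have "qC \<cdot> rep2 (e2 * B) = qC \<cdot> rep2 (ex2 * (ex1 * B))"
    by (simp add: e2_def e_comm mult.assoc)
  also have "\<dots> = (-1) \<odot> (qC \<cdot> rep2 (ex1 * (ex1 * B)))" by (rule cap_x2)
  also have "ex1 * (ex1 * B) = B * (ex1 * ex1)" using B(2) by (metis mult.assoc)
  also have "qC \<cdot> rep2 (B * (ex1 * ex1)) = qZ 2 0" using capz_mult_right[OF B(1)] by (simp add: capz_def)
  finally show ?thesis by (simp add: capz_def q_sm_Z)
qed

lemma cupz_mult_left: "cupz B \<Longrightarrow> cupz (y * B)"
  by (simp add: cupz_def rep2_mult q_cmp_assoc qT_simps q_cmp_Z_r)

lemma cupz_add: "cupz a \<Longrightarrow> cupz b \<Longrightarrow> cupz (a + b)"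
  by (simp add: cupz_def rep2_add q_cmp_add_l[where n=2 and m=2 and p=0] q_add_zero)

lemma cupz_neg: "cupz a \<Longrightarrow> cupz (- a)"
  by (simp add: cupz_def rep2_neg q_cmp_sm_l[where n=2 and m=2 and p=0] q_sm_Z)

lemma cupz_diff: "cupz a \<Longrightarrow> cupz b \<Longrightarrow> cupz (a - b)"
  using cupz_add[of a "- b"] cupz_neg[of b] by simp

lemma cupz_sc: "cupz a \<Longrightarrow> cupz (sc c a)"
  by (simp add: cupz_def rep2_sc q_cmp_sm_l[where n=2 and m=2 and p=0] q_sm_Z)

lemma cupz_e1: "cupz e1"
proof -
  have "rep2 e1 \<cdot> qU = ((qX \<otimes> qI 1) \<cdot> qU) \<oplus> ((qI 1 \<otimes> qX) \<cdot> (qU :: 'k::field qm))"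
    by (simp add: e1_def rep2_add rep_ex1 rep_ex2 q_cmp_add_l[where n=2 and m=2 and p=0] qT_simps)
  also have "\<dots> = qZ 0 2"
    by (simp add: D2 q_add_comm[where n=0 and m=2] q_add_neg qT_simps)
  finally show ?thesis by (simp add: cupz_def)
qed

lemma cc_capz: "capz B \<Longrightarrow> ecc * B = 0"
  by (rule rep2_inject') (simp add: capz_def rep2_mult rep_ecc q_cmp_assoc qT_simps q_cmp_Z_r rep2_zero)

lemma cc_cupz: "cupz B \<Longrightarrow> B * ecc = 0"
  by (rule rep2_inject') (simp add: cupz_def rep2_mult rep_ecc q_cmp_assoc[symmetric] qT_simps q_cmp_Z_l rep2_zero del: q_cmp_assoc)

lemma capz_x2B: "capz B \<Longrightarrow> ex1 * B = B * ex1 \<Longrightarrow> capz (ex2 * B)"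
proof -
  assume B: "capz B" "ex1 * B = B * ex1"
  have "qC \<cdot> rep2 (ex2 * B) = (-1) \<odot> (qC \<cdot> rep2 (ex1 * B))" by (rule cap_x2)
  also have "qC \<cdot> rep2 (ex1 * B) = qZ 2 0" using capz_mult_right[OF B(1)] B(2) by (simp add: capz_def)
  finally show ?thesis by (simp add: capz_def q_sm_Z)
qed

definition inv2 :: "'k::field e2 \<Rightarrow> bool" where
  "inv2 M \<longleftrightarrow> eT * M = M * eT \<and> capz M \<and> cupz M"

lemma inv2_step: "inv2 A \<Longrightarrow> inv2 B \<Longrightarrow> ex1 * B = B * ex1 \<Longrightarrow> inv2 (e1 * A - e2 * B)"
proof -
  assume A: "inv2 A" and B: "inv2 B" and c: "ex1 * B = B * ex1"
  have cB: "ecc * B = 0" by (intro cc_capz) (use B in \<open>simp add: inv2_def\<close>)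
  have cB2: "ecc * (ex2 * B) = 0" by (intro cc_capz capz_x2B) (use B c in \<open>simp_all add: inv2_def\<close>)
  have TA: "eT * A = A * eT" and TB: "eT * B = B * eT" using A B by (simp_all add: inv2_def)
  have "eT * (e1 * A - e2 * B) = (eT * e1) * A - (eT * e2) * B" by (simp add: algebra_simps)
  also have "\<dots> = e1 * (eT * A) - (e2 * eT + ex2 * ecc - ecc * ex2) * B"
    by (simp add: e_T_e1 e_T_e2 mult.assoc)
  also have "\<dots> = e1 * (eT * A) - e2 * (eT * B) - ex2 * (ecc * B) + ecc * (ex2 * B)"
    by (simp add: algebra_simps)
  also have "\<dots> = (e1 * A - e2 * B) * eT"
    by (simp add: cB cB2 TA TB algebra_simps)
  finally have T: "eT * (e1 * A - e2 * B) = (e1 * A - e2 * B) * eT" .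
  have C: "capz (e1 * A - e2 * B)"
    using B c by (intro capz_diff capz_e1 capz_e2) (simp_all add: inv2_def)
  have U: "cupz (e1 * A - e2 * B)"
    using A B by (intro cupz_diff cupz_mult_left) (simp_all add: inv2_def)
  show ?thesis using T C U by (simp add: inv2_def)
qed

definition mon :: "nat \<Rightarrow> nat \<Rightarrow> 'k::field e2" where
  "mon a b = ex1 ^ a * ex2 ^ b"

lemma x2_x1pow: "ex2 * ex1 ^ a = ex1 ^ a * (ex2 :: 'k::field e2)"
proof (induction a)
  case 0
  then show ?case by simp
next
  case (Suc a)
  have "ex2 * ex1 ^ Suc a = (ex2 * ex1) * (ex1 :: 'k e2) ^ a" by (simp add: mult.assoc)
  also have "\<dots> = ex1 * (ex2 * ex1 ^ a)" by (simp only: e_comm[symmetric] mult.assoc)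
  also have "\<dots> = ex1 ^ Suc a * ex2" by (simp add: Suc mult.assoc)
  finally show ?case .
qed

lemma x2pow_x1: "ex2 ^ b * ex1 = ex1 * (ex2 :: 'k::field e2) ^ b"
proof (induction b)
  case 0
  then show ?case by simp
next
  case (Suc b)
  have "ex2 ^ Suc b * ex1 = ex2 * ((ex2 :: 'k e2) ^ b * ex1)" by (simp add: mult.assoc)
  also have "\<dots> = (ex2 * ex1) * ex2 ^ b" by (simp add: Suc mult.assoc)
  also have "\<dots> = ex1 * ex2 ^ Suc b" by (simp only: e_comm[symmetric] mult.assoc power_Suc)
  finally show ?case .
qed

lemma x1_mono: "ex1 * mon a b = (mon (Suc a) b :: 'k::field e2)"
  by (simp add: mon_def mult.assoc)

lemma x2_mono: "ex2 * mon a b = (mon a (Suc b) :: 'k::field e2)"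
  by (simp add: mon_def mult.assoc[symmetric] x2_x1pow)

lemma mono_x1: "mon a b * ex1 = ex1 * (mon a b :: 'k::field e2)"
proof -
  have "mon a b * ex1 = ex1 ^ a * (ex2 ^ b * (ex1 :: 'k e2))" by (simp add: mon_def mult.assoc)
  also have "\<dots> = ex1 ^ a * ex1 * ex2 ^ b" by (simp add: x2pow_x1 mult.assoc)
  also have "\<dots> = ex1 * mon a b" by (simp add: mon_def power_commutes mult.assoc)
  finally show ?thesis .
qed

definition L :: "nat \<Rightarrow> (nat \<Rightarrow> 'k) \<Rightarrow> 'k::field e2" where
  "L r f = (\<Sum>a\<in>{..r}. sc (f a) (mon a (r - a)))"

lemma L_cong: "(\<And>a. a \<le> r \<Longrightarrow> f a = g a) \<Longrightarrow> L r f = L r g"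
  by (simp add: L_def)

lemma L_add: "L r f + L r g = L r (\<lambda>a. f a + g a)"
  by (simp add: L_def sum.distrib sc_add_scalar)

lemma L_diff: "L r f - L r g = L r (\<lambda>a. f a - g a)"
  by (simp add: L_def sum_subtractf sc_diff_scalar)

lemma x1_L: "ex1 * L r f = L (Suc r) (\<lambda>a. if a = 0 then 0 else f (a - 1))"
proof -
  have "ex1 * L r f = (\<Sum>a\<in>{..r}. sc (f a) (mon (Suc a) (r - a)))"
    by (simp add: L_def sum_distrib_left sc_mult_right x1_mono)
  also have "\<dots> = L (Suc r) (\<lambda>a. if a = 0 then 0 else f (a - 1))"
    by (simp only: L_def sum.atMost_Suc_shift) simp
  finally show ?thesis .
qed

lemma x2_L: "ex2 * L r f = L (Suc r) (\<lambda>a. if a = Suc r then 0 else f a)"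
proof -
  have "ex2 * L r f = (\<Sum>a\<in>{..r}. sc (f a) (mon a (Suc (r - a))))"
    by (simp add: L_def sum_distrib_left sc_mult_right x2_mono)
  also have "\<dots> = L (Suc r) (\<lambda>a. if a = Suc r then 0 else f a)"
    by (simp add: L_def Suc_diff_le)
  finally show ?thesis .
qed

lemma L_x1: "L r f * ex1 = ex1 * L r f"
  by (simp add: L_def sum_distrib_left sum_distrib_right sc_mult_right sc_mult_left mono_x1)

definition ME :: "nat \<Rightarrow> 'k::field e2" where
  "ME r = L r (\<lambda>a. kap a * kap (r - a))"

lemma mono_0_1: "mon 0 1 = ex2" and mono_1_0: "mon 1 0 = ex1"
  by (simp_all add: mon_def)

lemma ME_0: "ME 0 = 1"
  by (simp add: ME_def L_def kap_def mon_def)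

lemma mon_01: "mon 0 (Suc 0) = (ex2 :: 'k::field e2)" and mon_10: "mon (Suc 0) 0 = (ex1 :: 'k::field e2)"
  unfolding mon_def by simp_all

lemma ME_1: "ME 1 = sc 2 (e1 :: 'k::field e2)"
  by (simp add: ME_def L_def kap_def mon_01 mon_10 e1_def sc_add One_nat_def add.commute)

lemma e1_L: "e1 * L r f = L (Suc r) (\<lambda>a. (if a = 0 then 0 else f (a - 1)) + (if a = Suc r then 0 else f a))"
  by (simp add: e1_def distrib_right x1_L x2_L L_add)

lemma e2_L: "e2 * L r f = L (Suc (Suc r)) (\<lambda>a. if a = 0 then 0 else (if a - 1 = Suc r then 0 else f (a - 1)))"
  by (simp add: e2_def mult.assoc x2_L x1_L)

lemma ME_2: "ME 2 = e1 * ME 1"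
  unfolding ME_def e1_L numeral_2_eq_2 One_nat_def
  by (rule L_cong) (auto simp: kap_def le_Suc_eq)

lemma ME_rec: "1 \<le> r \<Longrightarrow> ME (Suc (Suc r)) = e1 * ME (Suc r) - e2 * ME r"
  unfolding ME_def e1_L e2_L L_diff
  by (rule L_cong) (auto simp: kap_def)

lemma ME_x1: "ex1 * ME r = ME r * ex1"
  by (simp add: ME_def L_x1)

lemma inv2_ME: "1 \<le> r \<Longrightarrow> inv2 (ME r :: 'k::field e2)"
proof (induction r rule: nat_less_induct)
  case (1 r)
  have inv1: "inv2 (ME 1 :: 'k e2)"
  proof -
    have "eT * sc 2 e1 = sc 2 e1 * (eT :: 'k e2)" by (simp add: sc_mult_left sc_mult_right e_T_e1)
    moreover have "capz (sc 2 (e1 :: 'k e2))" by (intro capz_sc) (use capz_e1[of 1] in simp)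
    moreover have "cupz (sc 2 (e1 :: 'k e2))" by (intro cupz_sc cupz_e1)
    ultimately show ?thesis by (simp add: inv2_def ME_1)
  qed
  show ?case
  proof (cases "r \<le> 2")
    case True
    with 1 have "r = 1 \<or> r = 2" by auto
    then show ?thesis
    proof
      assume "r = 1" then show ?thesis using inv1 by simp
    next
      assume r2: "r = 2"
      have "inv2 (e1 * ME 1 :: 'k e2)"
      proof -
        have "eT * (e1 * ME 1) = e1 * ME 1 * (eT :: 'k e2)"
          using inv1 by (simp add: inv2_def mult.assoc[symmetric] e_T_e1) (simp add: mult.assoc)
        moreover have "capz (e1 * ME 1 :: 'k e2)" by (rule capz_e1)
        moreover have "cupz (e1 * ME 1 :: 'k e2)" using inv1 by (intro cupz_mult_left) (simp add: inv2_def)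
        ultimately show ?thesis by (simp add: inv2_def)
      qed
      then show ?thesis using r2 by (simp add: ME_2)
    qed
  next
    case False
    then obtain q where q: "r = Suc (Suc q)" "1 \<le> q"
      using False by (intro that[of "r - 2"]) auto
    have "inv2 (e1 * ME (Suc q) - e2 * (ME q :: 'k e2))"
      by (rule inv2_step) (use 1 q in \<open>auto simp: ME_x1\<close>)
    then show ?thesis using q by (simp add: ME_rec)
  qed
qed

lemma rep2_x1pow: "rep2 ((ex1 :: 'k::field e2) ^ a) = qXp a \<otimes> qI 1"
proof (induction a)
  case 0
  then show ?case by (simp add: rep2_one I2)
next
  case (Suc a)
  have "rep2 ((ex1 :: 'k e2) ^ Suc a) = (qX \<otimes> qI 1) \<cdot> (qXp a \<otimes> qI 1)"
    by (simp add: rep2_mult rep_ex1 Suc)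
  also have "\<dots> = (qX \<cdot> qXp a) \<otimes> (qI 1 \<cdot> qI 1)"
    by (rule q_interchange[symmetric]) simp_all
  finally show ?case by (simp add: q_cmp_id_l)
qed

lemma rep2_x2pow: "rep2 ((ex2 :: 'k::field e2) ^ a) = qI 1 \<otimes> qXp a"
proof (induction a)
  case 0
  then show ?case by (simp add: rep2_one I2)
next
  case (Suc a)
  have "rep2 ((ex2 :: 'k e2) ^ Suc a) = (qI 1 \<otimes> qX) \<cdot> (qI 1 \<otimes> qXp a)"
    by (simp add: rep2_mult rep_ex2 Suc)
  also have "\<dots> = (qI 1 \<cdot> qI 1) \<otimes> (qX \<cdot> qXp a)"
    by (rule q_interchange[symmetric]) simp_all
  finally show ?case by (simp add: q_cmp_id_l)
qed

lemma rep2_mon: "rep2 (mon a b :: 'k::field e2) = qXp a \<otimes> qXp b"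
proof -
  have "rep2 (mon a b :: 'k e2) = (qXp a \<otimes> qI 1) \<cdot> (qI 1 \<otimes> qXp b)"
    by (simp add: mon_def rep2_mult rep2_x1pow rep2_x2pow)
  also have "\<dots> = (qXp a \<cdot> qI 1) \<otimes> (qI 1 \<cdot> qXp b)"
    by (rule q_interchange[symmetric]) simp_all
  finally show ?thesis by (simp add: q_cmp_id_l q_cmp_id_r)
qed

lemma QA_1: "QA r 1 = kap r \<odot> (qXp r :: 'k::field qm)"
proof -
  have "(QA r 1 :: 'k qm) = qsum 1 1 (\<lambda>b. if b = 0 then kap r \<odot> qXp r else qZ 1 1) {..r}"
    by (simp add: One_nat_def, rule qsum_cong) (auto simp: q_tns_unit_l q_tns_Z_l q_sm_Z)
  also have "\<dots> = kap r \<odot> qXp r" by (subst qsum_delta) auto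
  finally show ?thesis .
qed

lemma QA_2: "QA r 2 = rep2 (ME r :: 'k::field e2)"
proof -
  have "rep2 (ME r :: 'k e2) = qsum 2 2 (\<lambda>a. (kap a * kap (r - a)) \<odot> (qXp a \<otimes> qXp (r - a))) {..r}"
    by (simp add: ME_def L_def rep2_sum rep2_sc rep2_mon)
  also have "\<dots> = qsum 2 2 (\<lambda>a. kap (r - a) \<odot> (QA a 1 \<otimes> qXp (r - a))) {..r}"
    by (rule qsum_cong) (simp add: QA_1 q_tns_sm_l q_sm_sm qtyp_tns mult.commute)
  also have "\<dots> = QA r 2"
    by (simp only: Suc_1[symmetric] QA.simps(2))
  finally show ?thesis by simp
qed


lemma QA_X: "QA r 1 \<cdot> qX = qX \<cdot> (QA r 1 :: 'k::field qm)"
proof -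
  have "QA r 1 \<cdot> qX = kap r \<odot> (qXp r \<cdot> (qX :: 'k qm))" by (simp add: QA_1 q_cmp_sm_l)
  also have "\<dots> = kap r \<odot> (qX \<cdot> qXp r)" by (simp add: qX_comm)
  also have "\<dots> = qX \<cdot> QA r 1" by (simp add: QA_1 q_cmp_sm_r)
  finally show ?thesis .
qed

lemma QA_T: "QA r 2 \<cdot> qT = qT \<cdot> (QA r 2 :: 'k::field qm)"
proof -
  have "(ME r :: 'k e2) * eT = eT * ME r"
  proof (cases "r = 0")
    case True
    then show ?thesis by (simp add: ME_0)
  next
    case False
    then have "inv2 (ME r :: 'k e2)" by (intro inv2_ME) simp
    then show ?thesis by (simp add: inv2_def)
  qed
  then have "rep2 ((ME r :: 'k e2) * eT) = rep2 (eT * ME r)" by simp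
  then show ?thesis by (simp add: QA_2 rep2_mult rep_eT)
qed

lemma QA_C: "QA r 0 \<cdot> qC = qC \<cdot> (QA r 2 :: 'k::field qm)"
proof (cases "r = 0")
  case True
  then show ?thesis by (simp add: QA_2 ME_0 rep2_one q_cmp_id_l q_cmp_id_r)
next
  case False
  then have "inv2 (ME r :: 'k e2)" by (intro inv2_ME) simp
  then have "capz (ME r :: 'k e2)" by (simp add: inv2_def)
  then show ?thesis using False by (simp add: QA_2 capz_def q_cmp_Z_l)
qed

lemma QA_U: "QA r 2 \<cdot> qU = qU \<cdot> (QA r 0 :: 'k::field qm)"
proof (cases "r = 0")
  case True
  then show ?thesis by (simp add: QA_2 ME_0 rep2_one q_cmp_id_l q_cmp_id_r)
next
  case False
  then have "inv2 (ME r :: 'k e2)" by (intro inv2_ME) simp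
  then have "cupz (ME r :: 'k e2)" by (simp add: inv2_def)
  then show ?thesis using False by (simp add: QA_2 cupz_def q_cmp_Z_r)
qed

lemma QA_central: "nbtyp f = Some (n, m) \<Longrightarrow> QA r m \<cdot> abs_qm f = abs_qm f \<cdot> (QA r n :: 'k::field qm)"
proof (induction f arbitrary: n m r)
  case (Idn k)
  then show ?case by (auto simp: abs_simps q_cmp_id_l q_cmp_id_r)
next
  case X
  then show ?case by (auto simp: abs_simps QA_X)
next
  case Tau
  then show ?case by (auto simp: abs_simps QA_T)
next
  case Cap
  then show ?case by (auto simp: abs_simps QA_C simp del: QA.simps)
next
  case Cup
  then show ?case by (auto simp: abs_simps QA_U simp del: QA.simps)
next
  case (Cmp g f)
  then obtain k where f: "nbtyp f = Some (n, k)" and g: "nbtyp g = Some (k, m)"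
    by (auto split: option.splits prod.splits if_splits)
  have tf: "qhom n k (abs_qm f :: 'k qm)" and tg: "qhom k m (abs_qm g :: 'k qm)"
    using f g by (simp_all add: qtyp_abs)
  have "QA r m \<cdot> abs_qm (Cmp g f) = (QA r m \<cdot> abs_qm g) \<cdot> (abs_qm f :: 'k qm)"
    using tf tg by (simp add: abs_simps q_cmp_assoc)
  also have "\<dots> = abs_qm g \<cdot> (QA r k \<cdot> abs_qm f)"
    using tf tg Cmp.IH(1)[OF g] by (simp add: q_cmp_assoc)
  also have "\<dots> = (abs_qm g \<cdot> abs_qm f) \<cdot> QA r n"
    using tf tg Cmp.IH(2)[OF f] by (simp add: q_cmp_assoc)
  finally show ?case by (simp add: abs_simps)
next
  case (Tns f g)
  then obtain a b c d where f: "nbtyp f = Some (a, b)" and g: "nbtyp g = Some (c, d)"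
      and nm: "n = a + c" "m = b + d"
    by (auto split: option.splits prod.splits if_splits)
  have tf: "qhom a b (abs_qm f :: 'k qm)" and tg: "qhom c d (abs_qm g :: 'k qm)"
    using f g by (simp_all add: qtyp_abs)
  have "QA r (b + d) \<cdot> (abs_qm f \<otimes> abs_qm g)
      = qsum (a + c) (b + d) (\<lambda>i. (QA i b \<otimes> QA (r - i) d) \<cdot> (abs_qm f \<otimes> (abs_qm g :: 'k qm))) {..r}"
    using tf tg by (simp add: QA_split qsum_cmp_r qtyp_tns)
  also have "\<dots> = qsum (a + c) (b + d) (\<lambda>i. (abs_qm f \<otimes> abs_qm g) \<cdot> (QA i a \<otimes> QA (r - i) c)) {..r}"
  proof (rule qsum_cong)
    fix i
    have "(QA i b \<otimes> QA (r - i) d) \<cdot> (abs_qm f \<otimes> (abs_qm g :: 'k qm)) = (QA i b \<cdot> abs_qm f) \<otimes> (QA (r - i) d \<cdot> abs_qm g)"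
      using tf tg by (intro q_interchange[symmetric]) simp_all
    also have "\<dots> = (abs_qm f \<cdot> QA i a) \<otimes> (abs_qm g \<cdot> QA (r - i) c)"
      using Tns.IH(1)[OF f] Tns.IH(2)[OF g] by simp
    also have "\<dots> = (abs_qm f \<otimes> abs_qm g) \<cdot> (QA i a \<otimes> QA (r - i) c)"
      using tf tg by (intro q_interchange) simp_all
    finally show "(QA i b \<otimes> QA (r - i) d) \<cdot> (abs_qm f \<otimes> (abs_qm g :: 'k qm)) = (abs_qm f \<otimes> abs_qm g) \<cdot> (QA i a \<otimes> QA (r - i) c)" .
  qed
  also have "\<dots> = (abs_qm f \<otimes> abs_qm g) \<cdot> QA r (a + c)"
    using tf tg by (simp add: QA_split qsum_cmp_l qtyp_tns)
  finally show ?case using nm by (simp add: abs_simps)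
next
  case (Zero k l)
  then show ?case by (simp add: abs_simps q_cmp_Z_l q_cmp_Z_r)
next
  case (Add f g)
  then have f: "nbtyp f = Some (n, m)" and g: "nbtyp g = Some (n, m)"
    by (auto split: if_splits)
  have tf: "qhom n m (abs_qm f :: 'k qm)" and tg: "qhom n m (abs_qm g :: 'k qm)"
    using f g by (simp_all add: qtyp_abs)
  show ?case
    using tf tg Add.IH(1)[OF f] Add.IH(2)[OF g]
    by (simp add: abs_simps q_cmp_add_r[where n=n and m=m] q_cmp_add_l[where n=n and m=m])
next
  case (Sm c f)
  then have f: "nbtyp f = Some (n, m)" by simp
  have tf: "qhom n m (abs_qm f :: 'k qm)" using f by (simp add: qtyp_abs)
  show ?case
    using tf Sm.IH[OF f] by (simp add: abs_simps q_cmp_sm_r q_cmp_sm_l)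
qed

theorem theorem3p8:
  fixes t :: "'k::field"
  assumes char: "(2::'k) \<noteq> 0"
    and t01: "t = 0 \<or> t = 1"
  shows "\<forall>r n m (f :: 'k nbmor). nbhom n m f \<longrightarrow>
           nbeq t (Cmp (polyact m (qpoly r m)) f) (Cmp f (polyact n (qpoly r n)))"
proof (intro allI impI)
  fix r n m and f :: "'k nbmor"
  assume "nbhom n m f"
  then have f: "nbtyp f = Some (n, m)" by (simp add: nbhom_def)
  have "abs_qm (Cmp (polyact m (qpoly r m)) f) = abs_qm (Cmp f (polyact n (qpoly r n)))"
    by (simp add: abs_simps polyact_QA QA_central[OF f])
  then have "nbeqA (Cmp (polyact m (qpoly r m)) f) (Cmp f (polyact n (qpoly r n)))"
    by (simp add: qm.abs_eq_iff)
  then show "nbeq t (Cmp (polyact m (qpoly r m)) f) (Cmp f (polyact n (qpoly r n)))"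
    by (simp add: nbeqA_def)
qed

end
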